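(* Let $R$ be a commutative noetherian ring and $\mathfrak{a}$ an ideal contained in the Jacobson radical of $R$. Then $R$ is $\mathfrak{a}$-adically complete if and only if the $\mathfrak{a}$-adic completion $\widehat{R}^{\mathfrak{a}}$ is a finitely generated $R$-module.
   Context: A module $M$ is $\mathfrak{a}$-adically complete if the natural map $M\to \widehat{M}^{\mathfrak{a}}=\varprojlim_n M/\mathfrak{a}^nM$ is an isomorphism. *)

theory Defs
  imports "HOL-Algebra.Ring_Divisibility" "HOL-Algebra.Ideal_Product"
begin

primrec ideal_power :: "('a, 'b) ring_scheme \<Rightarrow> 'a set \<Rightarrow> nat \<Rightarrow> 'a set" where
  "ideal_power R I 0 = carrier R"
| "ideal_power R I (Suc n) = ideal_prod R I (ideal_power R I n)"

definition jacobson_radical :: "('a, 'b) ring_scheme \<Rightarrow> 'a set" where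
  "jacobson_radical R = carrier R \<inter> \<Inter> {M. maximalideal M R}"

text \<open>The I-adic completion as the inverse limit of R/I^n: compatible sequences
  of cosets x n of I^n, with x (n+1) mapping to x n (i.e. contained in it).\<close>
definition adic_completion :: "('a, 'b) ring_scheme \<Rightarrow> 'a set \<Rightarrow> (nat \<Rightarrow> 'a set) set" where
  "adic_completion R I =
     {x. (\<forall>n. x n \<in> a_rcosets\<^bsub>R\<^esub> (ideal_power R I n)) \<and> (\<forall>n. x (Suc n) \<subseteq> x n)}"

definition completion_map :: "('a, 'b) ring_scheme \<Rightarrow> 'a set \<Rightarrow> 'a \<Rightarrow> (nat \<Rightarrow> 'a set)" where
  "completion_map R I r = (\<lambda>n. ideal_power R I n +>\<^bsub>R\<^esub> r)"

definition adically_complete :: "('a, 'b) ring_scheme \<Rightarrow> 'a set \<Rightarrow> bool" where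
  "adically_complete R I \<longleftrightarrow> bij_betw (completion_map R I) (carrier R) (adic_completion R I)"

definition coset_rep :: "'a set \<Rightarrow> 'a" where
  "coset_rep C = (SOME c. c \<in> C)"

text \<open>The completion is a finitely generated R-module (R acting componentwise):
  there is a finite set of generators E in the completion such that every element x
  is an R-linear combination sum_(e in E) f(e) * e, computed componentwise in R/I^n.\<close>
definition completion_fin_gen :: "('a, 'b) ring_scheme \<Rightarrow> 'a set \<Rightarrow> bool" where
  "completion_fin_gen R I \<longleftrightarrow>
     (\<exists>E. finite E \<and> E \<subseteq> adic_completion R I \<and>
        (\<forall>x \<in> adic_completion R I. \<exists>f. f \<in> E \<rightarrow> carrier R \<and>
           (\<forall>n. x n = ideal_power R I n +>\<^bsub>R\<^esub>
                  (finsum R (\<lambda>e. f e \<otimes>\<^bsub>R\<^esub> coset_rep (e n)) E))))"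

end

theory Submission
  imports Defs
begin

locale kset = cring R + noetherian_ring R for R (structure) +
  fixes I :: "'a set"
  assumes I_ideal: "ideal I R" and I_jac: "I \<subseteq> jacobson_radical R"
begin

abbreviation P :: "nat \<Rightarrow> 'a set" where "P n \<equiv> ideal_power R I n"

lemma P_ideal: "ideal (P n) R"
proof (induct n)
  case 0 thus ?case by (simp add: oneideal)
next
  case (Suc n) thus ?case by (simp add: ideal_prod_is_ideal I_ideal)
qed

lemma P_carr: "P n \<subseteq> carrier R"
  using ideal.Icarr[OF P_ideal] by auto

lemma P_Suc_sub: "P (Suc n) \<subseteq> P n"
  using ideal_prod_inter[OF I_ideal P_ideal, of n] by simp

lemma P_mono: "m \<le> n \<Longrightarrow> P n \<subseteq> P m"
proof (induct n rule: dec_induct)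
  case base thus ?case by simp
next
  case (step n) thus ?case using P_Suc_sub[of n] by blast
qed

lemma P_one: "P 1 = I"
  using ideal_prod_one[OF I_ideal] by simp

definition cg :: "'a set \<Rightarrow> 'a \<Rightarrow> 'a \<Rightarrow> bool" where
  "cg J a b \<longleftrightarrow> a \<in> carrier R \<and> b \<in> carrier R \<and> a \<ominus> b \<in> J"

lemma cg_refl: "ideal J R \<Longrightarrow> a \<in> carrier R \<Longrightarrow> cg J a a"
  unfolding cg_def by (simp add: a_minus_def r_neg additive_subgroup.zero_closed ideal.axioms(1))

lemma cg_sym: "ideal J R \<Longrightarrow> cg J a b \<Longrightarrow> cg J b a"
proof -
  assume J: "ideal J R" and ab: "cg J a b"
  hence c: "a \<in> carrier R" "b \<in> carrier R" unfolding cg_def by auto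
  have "b \<ominus> a = \<ominus> (a \<ominus> b)" using c by algebra
  moreover have "\<ominus> (a \<ominus> b) \<in> J" using ab J unfolding cg_def
    by (simp add: additive_subgroup.a_inv_closed ideal.axioms(1))
  ultimately show ?thesis using c unfolding cg_def by simp
qed

lemma cg_trans: "ideal J R \<Longrightarrow> cg J a b \<Longrightarrow> cg J b c \<Longrightarrow> cg J a c"
proof -
  assume J: "ideal J R" and ab: "cg J a b" and bc: "cg J b c"
  hence c: "a \<in> carrier R" "b \<in> carrier R" "c \<in> carrier R" unfolding cg_def by auto
  have "a \<ominus> c = (a \<ominus> b) \<oplus> (b \<ominus> c)" using c by algebra
  moreover have "(a \<ominus> b) \<oplus> (b \<ominus> c) \<in> J" using ab bc J unfolding cg_def
    by (simp add: additive_subgroup.a_closed ideal.axioms(1))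
  ultimately show ?thesis using c unfolding cg_def by simp
qed

lemma cg_eq: "ideal J R \<Longrightarrow> a = b \<Longrightarrow> a \<in> carrier R \<Longrightarrow> cg J a b"
  using cg_refl by simp

lemma cg_add: "ideal J R \<Longrightarrow> cg J a b \<Longrightarrow> cg J c d \<Longrightarrow> cg J (a \<oplus> c) (b \<oplus> d)"
proof -
  assume J: "ideal J R" and ab: "cg J a b" and cd: "cg J c d"
  hence c: "a \<in> carrier R" "b \<in> carrier R" "c \<in> carrier R" "d \<in> carrier R" unfolding cg_def by auto
  have "(a \<oplus> c) \<ominus> (b \<oplus> d) = (a \<ominus> b) \<oplus> (c \<ominus> d)" using c by algebra
  moreover have "(a \<ominus> b) \<oplus> (c \<ominus> d) \<in> J" using ab cd J unfolding cg_def
    by (simp add: additive_subgroup.a_closed ideal.axioms(1))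
  ultimately show ?thesis using c unfolding cg_def by simp
qed

lemma cg_mult: "ideal J R \<Longrightarrow> cg J a b \<Longrightarrow> cg J c d \<Longrightarrow> cg J (a \<otimes> c) (b \<otimes> d)"
proof -
  assume J: "ideal J R" and ab: "cg J a b" and cd: "cg J c d"
  hence c: "a \<in> carrier R" "b \<in> carrier R" "c \<in> carrier R" "d \<in> carrier R" unfolding cg_def by auto
  have "(a \<otimes> c) \<ominus> (b \<otimes> d) = (a \<ominus> b) \<otimes> c \<oplus> b \<otimes> (c \<ominus> d)" using c by algebra
  moreover have "(a \<ominus> b) \<otimes> c \<oplus> b \<otimes> (c \<ominus> d) \<in> J" using ab cd J c unfolding cg_def
    by (simp add: additive_subgroup.a_closed ideal.axioms(1) ideal.I_r_closed ideal.I_l_closed)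
  ultimately show ?thesis using c unfolding cg_def by simp
qed

lemma cg_finsum: assumes J: "ideal J R" shows "finite A \<Longrightarrow> (\<And>x. x \<in> A \<Longrightarrow> cg J (f x) (g x)) \<Longrightarrow>
   cg J (finsum R f A) (finsum R g A)"
proof (induct A rule: finite_induct)
  case empty thus ?case by (simp add: cg_refl J)
next
  case (insert x F)
  have fc: "f \<in> insert x F \<rightarrow> carrier R" "g \<in> insert x F \<rightarrow> carrier R"
    using insert(4) unfolding cg_def by auto
  thus ?case using insert cg_add[OF J] by (simp add: Pi_def)
qed

lemma cg_zero_iff: "a \<in> carrier R \<Longrightarrow> cg J a \<zero> \<longleftrightarrow> a \<in> J"
  unfolding cg_def by (simp add: a_minus_def)

lemma cg_mono: "cg J a b \<Longrightarrow> J \<subseteq> J' \<Longrightarrow> cg J' a b"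
  unfolding cg_def by auto

end

context cring
begin

definition lc :: "'a set \<Rightarrow> ('a \<Rightarrow> 'a) \<Rightarrow> 'a" where
  "lc T g = (\<Oplus>t\<in>T. g t \<otimes> t)"

lemma finsum_in_ideal:
  assumes K: "ideal K R" shows "finite A \<Longrightarrow> f \<in> A \<rightarrow> K \<Longrightarrow> finsum R f A \<in> K"
proof (induct A rule: finite_induct)
  case empty thus ?case by (simp add: additive_subgroup.zero_closed[OF ideal.axioms(1)[OF K]])
next
  case (insert x F)
  have fc: "f \<in> insert x F \<rightarrow> carrier R" using insert(4) ideal.Icarr[OF K] by blast
  have "finsum R f (insert x F) = f x \<oplus> finsum R f F"
    using insert fc by (simp add: Pi_def)
  thus ?case using insert additive_subgroup.a_closed[OF ideal.axioms(1)[OF K]] by (simp add: Pi_def)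
qed

lemma lc_closed: "finite T \<Longrightarrow> T \<subseteq> carrier R \<Longrightarrow> g \<in> T \<rightarrow> carrier R \<Longrightarrow> lc T g \<in> carrier R"
  unfolding lc_def by (intro finsum_closed) (auto simp: Pi_def)

lemma lc_add: "finite T \<Longrightarrow> T \<subseteq> carrier R \<Longrightarrow> g \<in> T \<rightarrow> carrier R \<Longrightarrow> h \<in> T \<rightarrow> carrier R \<Longrightarrow>
   lc T g \<oplus> lc T h = lc T (\<lambda>t. g t \<oplus> h t)"
  unfolding lc_def
proof -
  assume a: "finite T" "T \<subseteq> carrier R" "g \<in> T \<rightarrow> carrier R" "h \<in> T \<rightarrow> carrier R"
  have "(\<Oplus>t\<in>T. g t \<otimes> t) \<oplus> (\<Oplus>t\<in>T. h t \<otimes> t) = (\<Oplus>t\<in>T. g t \<otimes> t \<oplus> h t \<otimes> t)"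
    using a by (intro finsum_addf[symmetric]) (auto simp: Pi_def)
  also have "\<dots> = (\<Oplus>t\<in>T. (g t \<oplus> h t) \<otimes> t)"
    using a by (intro finsum_cong') (auto simp: Pi_def l_distr)
  finally show "(\<Oplus>t\<in>T. g t \<otimes> t) \<oplus> (\<Oplus>t\<in>T. h t \<otimes> t) = (\<Oplus>t\<in>T. (g t \<oplus> h t) \<otimes> t)" .
qed

lemma lc_smult: "finite T \<Longrightarrow> T \<subseteq> carrier R \<Longrightarrow> g \<in> T \<rightarrow> carrier R \<Longrightarrow> r \<in> carrier R \<Longrightarrow>
   r \<otimes> lc T g = lc T (\<lambda>t. r \<otimes> g t)"
  unfolding lc_def
proof -
  assume a: "finite T" "T \<subseteq> carrier R" "g \<in> T \<rightarrow> carrier R" "r \<in> carrier R"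
  have "r \<otimes> (\<Oplus>t\<in>T. g t \<otimes> t) = (\<Oplus>t\<in>T. r \<otimes> (g t \<otimes> t))"
    using a by (intro finsum_rdistr) (auto simp: Pi_def)
  also have "\<dots> = (\<Oplus>t\<in>T. (r \<otimes> g t) \<otimes> t)"
    using a by (intro finsum_cong') (auto simp: Pi_def m_assoc)
  finally show "r \<otimes> (\<Oplus>t\<in>T. g t \<otimes> t) = (\<Oplus>t\<in>T. (r \<otimes> g t) \<otimes> t)" .
qed

lemma lc_zero: "finite T \<Longrightarrow> T \<subseteq> carrier R \<Longrightarrow> lc T (\<lambda>t. \<zero>) = \<zero>"
  unfolding lc_def
proof -
  assume a: "finite T" "T \<subseteq> carrier R"
  have "(\<Oplus>t\<in>T. \<zero> \<otimes> t) = (\<Oplus>t\<in>T. \<zero>)"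
    using a by (intro finsum_cong') auto
  thus "(\<Oplus>t\<in>T. \<zero> \<otimes> t) = \<zero>" by simp
qed

lemma lc_delta: "finite T \<Longrightarrow> T \<subseteq> carrier R \<Longrightarrow> s \<in> T \<Longrightarrow> lc T (\<lambda>t. if s = t then \<one> else \<zero>) = s"
  unfolding lc_def
proof -
  assume a: "finite T" "T \<subseteq> carrier R" "s \<in> T"
  have "(\<Oplus>t\<in>T. (if s = t then \<one> else \<zero>) \<otimes> t) = (\<Oplus>t\<in>T. if s = t then t else \<zero>)"
    using a by (intro finsum_cong') auto
  also have "\<dots> = s" using a by (intro finsum_singleton) auto
  finally show "(\<Oplus>t\<in>T. (if s = t then \<one> else \<zero>) \<otimes> t) = s" .
qed

definition LCS :: "'a set \<Rightarrow> 'a set \<Rightarrow> 'a set" where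
  "LCS T J = {lc T g | g. g \<in> T \<rightarrow> J}"

lemma LCS_ideal:
  assumes T: "finite T" "T \<subseteq> carrier R" and J: "ideal J R"
  shows "ideal (LCS T J) R"
proof -
  have Jc: "J \<subseteq> carrier R" using ideal.Icarr[OF J] by blast
  have sub: "LCS T J \<subseteq> carrier R"
    unfolding LCS_def using lc_closed[OF T] Jc by blast
  have smult: "x \<otimes> a \<in> LCS T J" if A: "a \<in> LCS T J" "x \<in> carrier R" for a x
  proof -
    obtain g where g: "g \<in> T \<rightarrow> J" "a = lc T g" using A(1) unfolding LCS_def by blast
    have "g \<in> T \<rightarrow> carrier R" using g(1) Jc by blast
    hence "x \<otimes> a = lc T (\<lambda>t. x \<otimes> g t)" using lc_smult[OF T, of g x] g(2) A(2) by simp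
    moreover have "(\<lambda>t. x \<otimes> g t) \<in> T \<rightarrow> J" using g(1) A(2) ideal.I_l_closed[OF J] by (simp add: Pi_def)
    ultimately show ?thesis unfolding LCS_def by blast
  qed
  have add: "a \<oplus> b \<in> LCS T J" if A: "a \<in> LCS T J" "b \<in> LCS T J" for a b
  proof -
    obtain g where g: "g \<in> T \<rightarrow> J" "a = lc T g" using A(1) unfolding LCS_def by blast
    obtain h where h: "h \<in> T \<rightarrow> J" "b = lc T h" using A(2) unfolding LCS_def by blast
    have "g \<in> T \<rightarrow> carrier R" "h \<in> T \<rightarrow> carrier R" using g(1) h(1) Jc by blast+
    hence "a \<oplus> b = lc T (\<lambda>t. g t \<oplus> h t)" using lc_add[OF T, of g h] g(2) h(2) by simp
    moreover have "(\<lambda>t. g t \<oplus> h t) \<in> T \<rightarrow> J"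
      using g(1) h(1) additive_subgroup.a_closed[OF ideal.axioms(1)[OF J]] by (simp add: Pi_def)
    ultimately show ?thesis unfolding LCS_def by blast
  qed
  have zero: "\<zero> \<in> LCS T J"
  proof -
    have "(\<lambda>t. \<zero>) \<in> T \<rightarrow> J" using additive_subgroup.zero_closed[OF ideal.axioms(1)[OF J]] by auto
    thus ?thesis using lc_zero[OF T] unfolding LCS_def by force
  qed
  have neg: "\<ominus> a \<in> LCS T J" if A: "a \<in> LCS T J" for a
  proof -
    have ac: "a \<in> carrier R" using A sub by blast
    have "\<ominus> a = (\<ominus> \<one>) \<otimes> a" using ac by (simp add: l_minus)
    thus ?thesis using smult[OF A] by simp
  qed
  show ?thesis
  proof (rule idealI)
    show "ring R" by (rule ring_axioms)
    show "subgroup (LCS T J) (add_monoid R)"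
    proof (rule add.subgroupI)
      show "LCS T J \<subseteq> carrier R" by (rule sub)
      show "LCS T J \<noteq> {}" using zero by blast
      show "\<And>a. a \<in> LCS T J \<Longrightarrow> \<ominus> a \<in> LCS T J" by (rule neg)
      show "\<And>a b. a \<in> LCS T J \<Longrightarrow> b \<in> LCS T J \<Longrightarrow> a \<oplus> b \<in> LCS T J"
        by (rule add)
    qed
    show "\<And>a x. a \<in> LCS T J \<Longrightarrow> x \<in> carrier R \<Longrightarrow> x \<otimes> a \<in> LCS T J" by (rule smult)
    show "\<And>a x. a \<in> LCS T J \<Longrightarrow> x \<in> carrier R \<Longrightarrow> a \<otimes> x \<in> LCS T J"
    proof -
      fix a x assume a: "a \<in> LCS T J" and x: "x \<in> carrier R"
      have "a \<in> carrier R" using a sub by blast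
      hence "a \<otimes> x = x \<otimes> a" using x by (simp add: m_comm)
      thus "a \<otimes> x \<in> LCS T J" using smult[OF a x] by simp
    qed
  qed
qed

lemma Idl_sub_LCS:
  assumes T: "finite T" "T \<subseteq> carrier R"
  shows "Idl T \<subseteq> LCS T (carrier R)"
proof (rule genideal_minimal)
  show "ideal (LCS T (carrier R)) R" by (rule LCS_ideal[OF T oneideal])
  show "T \<subseteq> LCS T (carrier R)"
  proof
    fix s assume s: "s \<in> T"
    have "(\<lambda>t. if s = t then \<one> else \<zero>) \<in> T \<rightarrow> carrier R" by auto
    moreover have "s = lc T (\<lambda>t. if s = t then \<one> else \<zero>)" using lc_delta[OF T s] by simp
    ultimately show "s \<in> LCS T (carrier R)" unfolding LCS_def by blast
  qed
qed

lemma LC: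
  assumes T: "finite T" "T \<subseteq> carrier R" and J: "ideal J R"
  shows "ideal_prod R (Idl T) J = LCS T J"
proof
  have Jc: "J \<subseteq> carrier R" using ideal.Icarr[OF J] by blast
  show "ideal_prod R (Idl T) J \<subseteq> LCS T J"
  proof
    fix x assume "x \<in> ideal_prod R (Idl T) J"
    thus "x \<in> LCS T J"
    proof (induct x rule: ideal_prod.induct)
      case (prod i j)
      have "i \<in> LCS T (carrier R)" using Idl_sub_LCS[OF T] prod(1) by (rule subsetD)
      then obtain c where c: "c \<in> T \<rightarrow> carrier R" "i = lc T c"
        unfolding LCS_def by blast
      have jc: "j \<in> carrier R" using prod(2) Jc by blast
      have "i \<otimes> j = j \<otimes> i" using c jc lc_closed[OF T] by (simp add: m_comm)
      also have "\<dots> = lc T (\<lambda>t. j \<otimes> c t)" using c jc lc_smult[OF T] by simp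
      also have "\<dots> = lc T (\<lambda>t. c t \<otimes> j)" unfolding lc_def using c jc T
        by (intro finsum_cong') (auto simp: m_comm Pi_def)
      finally have e: "i \<otimes> j = lc T (\<lambda>t. c t \<otimes> j)" .
      have "(\<lambda>t. c t \<otimes> j) \<in> T \<rightarrow> J" using c prod(2) ideal.I_l_closed[OF J] by (auto simp: Pi_def jc)
      thus ?case using e unfolding LCS_def by blast
    next
      case (sum s1 s2)
      show ?case by (rule additive_subgroup.a_closed[OF ideal.axioms(1)[OF LCS_ideal[OF T J]]]) (use sum in simp_all)
    qed
  qed
next
  have Jc: "J \<subseteq> carrier R" using ideal.Icarr[OF J] by blast
  show "LCS T J \<subseteq> ideal_prod R (Idl T) J"
  proof
    fix x assume "x \<in> LCS T J"
    then obtain g where g: "g \<in> T \<rightarrow> J" "x = lc T g" unfolding LCS_def by blast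
    have "(\<lambda>t. g t \<otimes> t) \<in> T \<rightarrow> ideal_prod R (Idl T) J"
    proof
      fix t assume t: "t \<in> T"
      have "t \<otimes> g t \<in> ideal_prod R (Idl T) J"
        by (rule ideal_prod.prod) (use genideal_self[OF T(2)] t g(1) in auto)
      moreover have "t \<in> carrier R" "g t \<in> carrier R" using t T g(1) Jc by auto
      ultimately show "g t \<otimes> t \<in> ideal_prod R (Idl T) J" by (simp add: m_comm)
    qed
    thus "x \<in> ideal_prod R (Idl T) J" unfolding g(2) lc_def
      by (rule finsum_in_ideal[OF ideal_prod_is_ideal[OF genideal_ideal[OF T(2)] J] T(1)])
  qed
qed


end

context cring
begin

lemma setadd_mem: "u \<in> H \<Longrightarrow> v \<in> K \<Longrightarrow> u \<oplus> v \<in> H <+>\<^bsub>R\<^esub> K"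
  unfolding set_add_def' by blast

lemma setadd_elim: "x \<in> H <+>\<^bsub>R\<^esub> K \<Longrightarrow> \<exists>u\<in>H. \<exists>v\<in>K. x = u \<oplus> v"
  unfolding set_add_def' by blast

lemma setadd_sub_ideal:
  assumes L: "ideal L R" and "H \<subseteq> L" "K \<subseteq> L" shows "H <+>\<^bsub>R\<^esub> K \<subseteq> L"
proof
  fix x assume "x \<in> H <+>\<^bsub>R\<^esub> K"
  then obtain u v where uv: "u \<in> H" "v \<in> K" "x = u \<oplus> v" using setadd_elim by blast
  have "u \<in> L" "v \<in> L" using uv assms by auto
  thus "x \<in> L" using uv(3) additive_subgroup.a_closed[OF ideal.axioms(1)[OF L]] by simp
qed

lemma ipow_ideal: "ideal A R \<Longrightarrow> ideal (ideal_power R A n) R"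
proof (induct n)
  case 0 thus ?case by (simp add: oneideal)
next
  case (Suc n) thus ?case by (simp add: ideal_prod_is_ideal)
qed

lemma prod_sub:
  assumes Z: "ideal Z R" and H: "\<And>a x. a \<in> A \<Longrightarrow> x \<in> X \<Longrightarrow> a \<otimes> x \<in> Z"
  shows "ideal_prod R A X \<subseteq> Z"
proof
  fix s assume "s \<in> ideal_prod R A X"
  thus "s \<in> Z"
  proof (induct s rule: ideal_prod.induct)
    case (prod i j) thus ?case by (rule H)
  next
    case (sum s1 s2) thus ?case using additive_subgroup.a_closed[OF ideal.axioms(1)[OF Z]] by simp
  qed
qed

lemma pow_sum:
  assumes A: "ideal A R" and B: "ideal B R"
  shows "p + q = n \<Longrightarrow> ideal_power R (A <+>\<^bsub>R\<^esub> B) n \<subseteq> ideal_power R A p <+>\<^bsub>R\<^esub> ideal_power R B q"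
proof (induct n arbitrary: p q)
  case 0
  have "ideal_power R (A <+>\<^bsub>R\<^esub> B) 0 \<subseteq> carrier R" by simp
  also have "\<dots> \<subseteq> ideal_power R A p <+>\<^bsub>R\<^esub> ideal_power R B q"
  proof
    fix x assume x: "x \<in> carrier R"
    have "x = x \<oplus> \<zero>" using x by simp
    moreover have "\<zero> \<in> ideal_power R B q"
      by (rule additive_subgroup.zero_closed[OF ideal.axioms(1)[OF ipow_ideal[OF B]]])
    moreover have "x \<in> ideal_power R A p" using 0 x by simp
    ultimately show "x \<in> ideal_power R A p <+>\<^bsub>R\<^esub> ideal_power R B q" using setadd_mem by metis
  qed
  finally show ?case .
next
  case (Suc n)
  have AB: "ideal (A <+>\<^bsub>R\<^esub> B) R" by (rule add_ideals[OF A B])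
  have Zi: "ideal (ideal_power R A p <+>\<^bsub>R\<^esub> ideal_power R B q) R"
    by (rule add_ideals[OF ipow_ideal[OF A] ipow_ideal[OF B]])
  have LHSc: "ideal_power R (A <+>\<^bsub>R\<^esub> B) (Suc n) \<subseteq> carrier R"
    using ideal.Icarr[OF ipow_ideal[OF AB]] by blast
  show ?case
  proof (cases "p = 0 \<or> q = 0")
    case True
    show ?thesis
    proof
      fix x assume "x \<in> ideal_power R (A <+>\<^bsub>R\<^esub> B) (Suc n)"
      hence x: "x \<in> carrier R" using LHSc by blast
      have z1: "\<zero> \<in> ideal_power R B q"
        by (rule additive_subgroup.zero_closed[OF ideal.axioms(1)[OF ipow_ideal[OF B]]])
      have z2: "\<zero> \<in> ideal_power R A p"
        by (rule additive_subgroup.zero_closed[OF ideal.axioms(1)[OF ipow_ideal[OF A]]])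
      show "x \<in> ideal_power R A p <+>\<^bsub>R\<^esub> ideal_power R B q"
      proof (cases "p = 0")
        case True
        have "x = x \<oplus> \<zero>" using x by simp
        moreover have "x \<in> ideal_power R A p" using True x by simp
        ultimately show ?thesis using setadd_mem z1 by metis
      next
        case False
        hence q0: "q = 0" using \<open>p = 0 \<or> q = 0\<close> by simp
        have "x = \<zero> \<oplus> x" using x by simp
        moreover have "x \<in> ideal_power R B q" using q0 x by simp
        ultimately show ?thesis using setadd_mem z2 by metis
      qed
    qed
  next
    case False
    then obtain p' q' where pq: "p = Suc p'" "q = Suc q'" by (metis not0_implies_Suc)
    have "p' + q = n" using Suc(2) pq by simp
    note IH1 = Suc(1)[OF this]
    have "p + q' = n" using Suc(2) pq by simp
    note IH2 = Suc(1)[OF this]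
    have "ideal_prod R (A <+>\<^bsub>R\<^esub> B) (ideal_power R (A <+>\<^bsub>R\<^esub> B) n) \<subseteq> ideal_power R A p <+>\<^bsub>R\<^esub> ideal_power R B q"
    proof (rule prod_sub[OF Zi])
      fix c x assume c: "c \<in> A <+>\<^bsub>R\<^esub> B" and x: "x \<in> ideal_power R (A <+>\<^bsub>R\<^esub> B) n"
      obtain a b where ab: "a \<in> A" "b \<in> B" "c = a \<oplus> b" using setadd_elim[OF c] by blast
      have ac: "a \<in> carrier R" "b \<in> carrier R" using ab ideal.Icarr[OF A] ideal.Icarr[OF B] by auto
      have xc: "x \<in> carrier R" using x ideal.Icarr[OF ipow_ideal[OF AB]] by blast
      have Zc: "ideal_power R A p <+>\<^bsub>R\<^esub> ideal_power R B q \<subseteq> carrier R"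
        using ideal.Icarr[OF Zi] by blast
      have 1: "a \<otimes> x \<in> ideal_power R A p <+>\<^bsub>R\<^esub> ideal_power R B q"
      proof -
        obtain u v where uv: "u \<in> ideal_power R A p'" "v \<in> ideal_power R B q" "x = u \<oplus> v"
          using setadd_elim IH1 x by blast
        have uc: "u \<in> carrier R" "v \<in> carrier R"
          using uv ideal.Icarr[OF ipow_ideal[OF A]] ideal.Icarr[OF ipow_ideal[OF B]] by auto
        have "a \<otimes> u \<in> ideal_power R A p" using pq ab(1) uv(1) by (simp add: ideal_prod.prod)
        moreover have "a \<otimes> v \<in> ideal_power R B q"
          using ideal.I_l_closed[OF ipow_ideal[OF B] uv(2) ac(1)] .
        moreover have "a \<otimes> x = a \<otimes> u \<oplus> a \<otimes> v" using uv(3) uc ac by (simp add: r_distr)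
        ultimately show ?thesis using setadd_mem by metis
      qed
      have 2: "b \<otimes> x \<in> ideal_power R A p <+>\<^bsub>R\<^esub> ideal_power R B q"
      proof -
        obtain u v where uv: "u \<in> ideal_power R A p" "v \<in> ideal_power R B q'" "x = u \<oplus> v"
          using setadd_elim IH2 x by blast
        have uc: "u \<in> carrier R" "v \<in> carrier R"
          using uv ideal.Icarr[OF ipow_ideal[OF A]] ideal.Icarr[OF ipow_ideal[OF B]] by auto
        have "b \<otimes> v \<in> ideal_power R B q" using pq ab(2) uv(2) by (simp add: ideal_prod.prod)
        moreover have "b \<otimes> u \<in> ideal_power R A p"
          using ideal.I_l_closed[OF ipow_ideal[OF A] uv(1) ac(2)] .
        moreover have "b \<otimes> x = b \<otimes> u \<oplus> b \<otimes> v" using uv(3) uc ac by (simp add: r_distr)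
        ultimately show ?thesis using setadd_mem by metis
      qed
      have "c \<otimes> x = a \<otimes> x \<oplus> b \<otimes> x" using ab(3) ac xc by (simp add: l_distr)
      thus "c \<otimes> x \<in> ideal_power R A p <+>\<^bsub>R\<^esub> ideal_power R B q"
        using 1 2 additive_subgroup.a_closed[OF ideal.axioms(1)[OF Zi]] by simp
    qed
    thus ?thesis by simp
  qed
qed

lemma pow_principal:
  assumes t: "t \<in> carrier R" shows "ideal_power R (PIdl t) k \<subseteq> PIdl (t [^] k)"
proof (induct k)
  case 0
  show ?case
  proof
    fix x assume "x \<in> ideal_power R (PIdl t) 0"
    hence x: "x \<in> carrier R" by simp
    have "t [^] (0::nat) = \<one>" by simp
    moreover have "x = x \<otimes> \<one>" using x by simp
    ultimately have "x = x \<otimes> t [^] (0::nat)" by simp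
    thus "x \<in> PIdl (t [^] (0::nat))" unfolding cgenideal_def using x by blast
  qed
next
  case (Suc k)
  have tk: "t [^] k \<in> carrier R" using t by (rule nat_pow_closed)
  have tS: "t [^] Suc k = t [^] k \<otimes> t" by (rule nat_pow_Suc)
  have tSc: "t [^] Suc k \<in> carrier R" using t by (rule nat_pow_closed)
  have "ideal_prod R (PIdl t) (ideal_power R (PIdl t) k) \<subseteq> PIdl (t [^] Suc k)"
  proof (rule prod_sub[OF cgenideal_ideal[OF tSc]])
    fix a x assume a: "a \<in> PIdl t" and x: "x \<in> ideal_power R (PIdl t) k"
    obtain r where r: "r \<in> carrier R" "a = r \<otimes> t" using a unfolding cgenideal_def by blast
    have "x \<in> PIdl (t [^] k)" using x Suc by blast
    then obtain s where s: "s \<in> carrier R" "x = s \<otimes> t [^] k" unfolding cgenideal_def by blast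
    have e: "\<And>u. u \<in> carrier R \<Longrightarrow> (r \<otimes> t) \<otimes> (s \<otimes> u) = (r \<otimes> s) \<otimes> (u \<otimes> t)"
      using r(1) s(1) t by algebra
    have "a \<otimes> x = (r \<otimes> s) \<otimes> t [^] Suc k" unfolding r(2) s(2) tS using e[OF tk] .
    moreover have "r \<otimes> s \<in> carrier R" using r s by simp
    ultimately show "a \<otimes> x \<in> PIdl (t [^] Suc k)" unfolding cgenideal_def by blast
  qed
  thus ?case by simp
qed

lemma Idl_insert:
  assumes t: "t \<in> carrier R" and T: "T \<subseteq> carrier R"
  shows "Idl (insert t T) = PIdl t <+>\<^bsub>R\<^esub> Idl T"
proof
  have RI: "ideal (PIdl t <+>\<^bsub>R\<^esub> Idl T) R" by (rule add_ideals[OF cgenideal_ideal[OF t] genideal_ideal[OF T]])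
  show "Idl (insert t T) \<subseteq> PIdl t <+>\<^bsub>R\<^esub> Idl T"
  proof (rule genideal_minimal[OF RI])
    show "insert t T \<subseteq> PIdl t <+>\<^bsub>R\<^esub> Idl T"
    proof
      fix s assume s: "s \<in> insert t T"
      show "s \<in> PIdl t <+>\<^bsub>R\<^esub> Idl T"
      proof (cases "s = t")
        case True
        have "t = t \<oplus> \<zero>" using t by simp
        moreover have "\<zero> \<in> Idl T"
          by (rule additive_subgroup.zero_closed[OF ideal.axioms(1)[OF genideal_ideal[OF T]]])
        ultimately show ?thesis using True setadd_mem cgenideal_self[OF t] by metis
      next
        case False
        hence sT: "s \<in> T" using s by simp
        hence "s = \<zero> \<oplus> s" using T by auto
        moreover have "\<zero> \<in> PIdl t"
          by (rule additive_subgroup.zero_closed[OF ideal.axioms(1)[OF cgenideal_ideal[OF t]]])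
        moreover have "s \<in> Idl T" using genideal_self[OF T] sT by blast
        ultimately show ?thesis using setadd_mem by metis
      qed
    qed
  qed
next
  have iT: "insert t T \<subseteq> carrier R" using t T by simp
  have Ii: "ideal (Idl (insert t T)) R" by (rule genideal_ideal[OF iT])
  have "PIdl t \<subseteq> Idl (insert t T)"
    by (rule cgenideal_minimal[OF Ii]) (use genideal_self[OF iT] in blast)
  moreover have "Idl T \<subseteq> Idl (insert t T)"
    by (rule genideal_minimal[OF Ii]) (use genideal_self[OF iT] in blast)
  ultimately show "PIdl t <+>\<^bsub>R\<^esub> Idl T \<subseteq> Idl (insert t T)" by (rule setadd_sub_ideal[OF Ii])
qed

lemma pow_gen_sub:
  assumes L: "ideal L R"
  shows "finite T \<Longrightarrow> T \<subseteq> carrier R \<Longrightarrow> (\<forall>t\<in>T. \<exists>k::nat. t [^] k \<in> L) \<Longrightarrow>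
         \<exists>m. ideal_power R (Idl T) m \<subseteq> L"
proof (induct T rule: finite_induct)
  case empty
  have "ideal_power R (Idl {}) 1 = Idl {}"
    using ideal_prod_one[OF genideal_ideal[of "{}"]] by simp
  moreover have "Idl {} \<subseteq> L" by (rule genideal_minimal[OF L]) simp
  ultimately show ?case by metis
next
  case (insert t T)
  have t: "t \<in> carrier R" and T: "T \<subseteq> carrier R" using insert by auto
  obtain m where m: "ideal_power R (Idl T) m \<subseteq> L" using insert by auto
  obtain k :: nat where k: "t [^] k \<in> L" using insert by auto
  have "ideal_power R (Idl (insert t T)) (k + m) = ideal_power R (PIdl t <+>\<^bsub>R\<^esub> Idl T) (k + m)"
    by (simp add: Idl_insert[OF t T])
  also have "\<dots> \<subseteq> ideal_power R (PIdl t) k <+>\<^bsub>R\<^esub> ideal_power R (Idl T) m"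
    by (rule pow_sum[OF cgenideal_ideal[OF t] genideal_ideal[OF T]]) simp
  also have "\<dots> \<subseteq> L"
  proof (rule setadd_sub_ideal[OF L _ m])
    have "PIdl (t [^] k) \<subseteq> L" by (rule cgenideal_minimal[OF L k])
    thus "ideal_power R (PIdl t) k \<subseteq> L" using pow_principal[OF t, of k] by blast
  qed
  finally show ?case by blast
qed

lemma colon_ideal:
  assumes L: "ideal L R" and c: "c \<in> carrier R"
  shows "ideal {r \<in> carrier R. c \<otimes> r \<in> L} R"
proof -
  let ?A = "{r \<in> carrier R. c \<otimes> r \<in> L}"
  have Lc: "L \<subseteq> carrier R" using ideal.Icarr[OF L] by blast
  have sm: "x \<otimes> r \<in> ?A" if "r \<in> ?A" "x \<in> carrier R" for r x
  proof -
    have "c \<otimes> (x \<otimes> r) = x \<otimes> (c \<otimes> r)" using that c by (simp add: m_lcomm)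
    thus ?thesis using that ideal.I_l_closed[OF L] by simp
  qed
  show ?thesis
  proof (rule idealI)
    show "ring R" by (rule ring_axioms)
    show "subgroup ?A (add_monoid R)"
    proof (rule add.subgroupI)
      show "?A \<subseteq> carrier R" by blast
      have "c \<otimes> \<zero> = \<zero>" using c by simp
      hence "\<zero> \<in> ?A" using additive_subgroup.zero_closed[OF ideal.axioms(1)[OF L]] by simp
      thus "?A \<noteq> {}" by blast
      show "\<ominus> a \<in> ?A" if "a \<in> ?A" for a
      proof -
        have "c \<otimes> (\<ominus> a) = \<ominus> (c \<otimes> a)" using that c by (simp add: r_minus)
        thus ?thesis using that additive_subgroup.a_inv_closed[OF ideal.axioms(1)[OF L]] by simp
      qed
      show "a \<oplus> b \<in> ?A" if "a \<in> ?A" "b \<in> ?A" for a b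
      proof -
        have "c \<otimes> (a \<oplus> b) = c \<otimes> a \<oplus> c \<otimes> b" using that c by (simp add: r_distr)
        thus ?thesis using that additive_subgroup.a_closed[OF ideal.axioms(1)[OF L]] by simp
      qed
    qed
    show "x \<otimes> a \<in> ?A" if "a \<in> ?A" "x \<in> carrier R" for a x using sm that by blast
    show "a \<otimes> x \<in> ?A" if "a \<in> ?A" "x \<in> carrier R" for a x
      using sm[OF that] that by (simp add: m_comm)
  qed
qed

end

context kset
begin

lemma ex_max:
  assumes F: "F \<subseteq> {J. ideal J R}" "F \<noteq> {}"
  shows "\<exists>M\<in>F. \<forall>N\<in>F. M \<subseteq> N \<longrightarrow> N = M"
proof (rule subset_Zorn)
  fix C assume C: "subset.chain F C"
  show "\<exists>U\<in>F. \<forall>X\<in>C. X \<subseteq> U"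
  proof (cases "C = {}")
    case True then show ?thesis using F(2) by blast
  next
    case False
    have "subset.chain {J. ideal J R} C" using C F(1) unfolding pred_on.chain_def by blast
    hence "\<Union>C \<in> C" using ideal_chain_is_trivial False by blast
    moreover have "C \<subseteq> F" using C unfolding pred_on.chain_def by blast
    ultimately show ?thesis by blast
  qed
qed

lemma one_minus_unit:
  assumes x: "x \<in> I" shows "\<one> \<ominus> x \<in> Units R"
proof (rule ccontr)
  assume nu: "\<one> \<ominus> x \<notin> Units R"
  have xc: "x \<in> carrier R" using x ideal.Icarr[OF I_ideal] by blast
  define y where "y = \<one> \<ominus> x"
  have yc: "y \<in> carrier R" using xc unfolding y_def by simp
  define F where "F = {N. ideal N R \<and> PIdl y \<subseteq> N \<and> \<one> \<notin> N}"
  have "\<one> \<notin> PIdl y"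
  proof
    assume "\<one> \<in> PIdl y"
    then obtain r where r: "r \<in> carrier R" "\<one> = r \<otimes> y" unfolding cgenideal_def by blast
    have ry: "r \<otimes> y = \<one>" using r(2) by simp
    hence yr: "y \<otimes> r = \<one>" using yc r(1) by (simp add: m_comm)
    have "\<exists>z\<in>carrier R. z \<otimes> y = \<one> \<and> y \<otimes> z = \<one>" using r(1) ry yr by blast
    hence "y \<in> Units R" unfolding Units_def using yc by simp
    thus False using nu unfolding y_def by simp
  qed
  hence PF: "PIdl y \<in> F" unfolding F_def using cgenideal_ideal[OF yc] by simp
  have FI: "F \<subseteq> {J. ideal J R}" unfolding F_def by (rule subsetI) simp
  have FN: "F \<noteq> {}" using PF by force
  obtain M where M: "M \<in> F" "\<And>N. N \<in> F \<Longrightarrow> M \<subseteq> N \<Longrightarrow> N = M"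
    using ex_max[OF FI FN] by metis
  have Mi: "ideal M R" and yM: "PIdl y \<subseteq> M" and oM: "\<one> \<notin> M" using M(1) unfolding F_def by simp_all
  have "maximalideal M R"
  proof (rule maximalidealI[OF Mi])
    show "carrier R \<noteq> M" using oM one_closed by metis
    fix J assume J: "ideal J R" "M \<subseteq> J" "J \<subseteq> carrier R"
    show "J = M \<or> J = carrier R"
    proof (cases "\<one> \<in> J")
      case True thus ?thesis using ideal.one_imp_carrier[OF J(1)] by simp
    next
      case False
      have "PIdl y \<subseteq> J" using yM J(2) by (rule subset_trans)
      hence "J \<in> F" unfolding F_def using J(1) False by simp
      thus ?thesis using M(2) J(2) by simp
    qed
  qed
  hence "M \<in> {M. maximalideal M R}" by simp
  hence xM: "x \<in> M" using x I_jac unfolding jacobson_radical_def by blast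
  have yM': "y \<in> M" using yM cgenideal_self[OF yc] by (rule subsetD)
  have "y \<oplus> x = \<one>" unfolding y_def using xc by (simp add: a_minus_def a_assoc l_neg)
  moreover have "y \<oplus> x \<in> M" using additive_subgroup.a_closed[OF ideal.axioms(1)[OF Mi] yM' xM] .
  ultimately have "\<one> \<in> M" by simp
  thus False using oM by simp
qed

end

context cring
begin

lemma eq_helper:
  assumes c: "a \<in> carrier R" "b \<in> carrier R" "c \<in> carrier R" and e: "b = a \<otimes> b \<oplus> c"
  shows "(\<one> \<ominus> a) \<otimes> b = c"
proof -
  have h2: "(\<one> \<ominus> a) \<otimes> b = b \<ominus> a \<otimes> b" using c by algebra
  have h3: "b \<ominus> a \<otimes> b = (a \<otimes> b \<oplus> c) \<ominus> a \<otimes> b"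
    using e by (rule arg_cong[where f = "\<lambda>z. z \<ominus> a \<otimes> b"])
  have h4: "(a \<otimes> b \<oplus> c) \<ominus> a \<otimes> b = c" using c by algebra
  show ?thesis using h2 h3 h4 by simp
qed

lemma lc_insert:
  assumes "finite S" "d \<notin> S" "insert d S \<subseteq> carrier R" "g \<in> insert d S \<rightarrow> carrier R"
  shows "lc (insert d S) g = g d \<otimes> d \<oplus> lc S g"
  unfolding lc_def using assms by (intro finsum_insert) (auto simp: Pi_def)

lemma lc_empty: "lc {} g = \<zero>"
  unfolding lc_def by simp

end

context kset
begin

lemma nak_ideal:
  assumes K: "K \<subseteq> carrier R"
  shows "finite S \<Longrightarrow> S \<subseteq> K \<Longrightarrow> (\<forall>k\<in>K. \<exists>g\<in>S \<rightarrow> I. k = lc S g) \<Longrightarrow> (\<forall>k\<in>K. k = \<zero>)"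
proof (induct S rule: finite_induct)
  case empty thus ?case by (simp add: lc_empty)
next
  case (insert d S)
  have Ic: "I \<subseteq> carrier R" using ideal.Icarr[OF I_ideal] by blast
  have iS: "insert d S \<subseteq> carrier R" using insert(4) K by blast
  have Sc: "S \<subseteq> carrier R" and dc: "d \<in> carrier R" using iS by auto
  have dK: "d \<in> K" using insert(4) by simp
  obtain g where g: "g \<in> insert d S \<rightarrow> I" "d = lc (insert d S) g" using insert(5) dK by blast
  have gc: "g \<in> insert d S \<rightarrow> carrier R" using g(1) Ic by blast
  have gS: "g \<in> S \<rightarrow> carrier R" using gc by blast
  have gdI: "g d \<in> I" using g(1) by blast
  have gdc: "g d \<in> carrier R" using gdI Ic by blast
  have Lc: "lc S g \<in> carrier R" using lc_closed[OF insert(1) Sc gS] .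
  have e1: "d = g d \<otimes> d \<oplus> lc S g" using g(2) lc_insert[OF insert(1) insert(2) iS gc] by simp
  have e2: "(\<one> \<ominus> g d) \<otimes> d = lc S g" by (rule eq_helper[OF gdc dc Lc e1])
  have U: "\<one> \<ominus> g d \<in> Units R" by (rule one_minus_unit[OF gdI])
  define u where "u = inv (\<one> \<ominus> g d)"
  have uc: "u \<in> carrier R" unfolding u_def using U by simp
  have ui: "u \<otimes> (\<one> \<ominus> g d) = \<one>" unfolding u_def using U by simp
  have "u \<otimes> lc S g = u \<otimes> ((\<one> \<ominus> g d) \<otimes> d)" using e2 by simp
  also have "\<dots> = (u \<otimes> (\<one> \<ominus> g d)) \<otimes> d" using uc gdc dc by (simp add: m_assoc)
  also have "\<dots> = d" using ui dc by simp
  finally have e3: "d = lc S (\<lambda>s. u \<otimes> g s)" using lc_smult[OF insert(1) Sc gS uc] by simp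
  have "\<forall>k\<in>K. \<exists>h\<in>S \<rightarrow> I. k = lc S h"
  proof
    fix k assume kK: "k \<in> K"
    obtain h where h: "h \<in> insert d S \<rightarrow> I" "k = lc (insert d S) h" using insert(5) kK by blast
    have hc: "h \<in> insert d S \<rightarrow> carrier R" using h(1) Ic by blast
    have hS: "h \<in> S \<rightarrow> carrier R" using hc by blast
    have hdc: "h d \<in> carrier R" using hc by blast
    have ugS: "(\<lambda>s. u \<otimes> g s) \<in> S \<rightarrow> carrier R" using gS uc by (simp add: Pi_def)
    have ghS: "(\<lambda>s. h d \<otimes> (u \<otimes> g s)) \<in> S \<rightarrow> carrier R" using gS uc hdc by (simp add: Pi_def)
    have "k = h d \<otimes> d \<oplus> lc S h" using h(2) lc_insert[OF insert(1) insert(2) iS hc] by simp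
    also have "\<dots> = h d \<otimes> lc S (\<lambda>s. u \<otimes> g s) \<oplus> lc S h" using e3 by simp
    also have "\<dots> = lc S (\<lambda>s. h d \<otimes> (u \<otimes> g s)) \<oplus> lc S h"
      using lc_smult[OF insert(1) Sc ugS hdc] by simp
    also have "\<dots> = lc S (\<lambda>s. h d \<otimes> (u \<otimes> g s) \<oplus> h s)"
      using lc_add[OF insert(1) Sc ghS hS] by simp
    finally have ke: "k = lc S (\<lambda>s. h d \<otimes> (u \<otimes> g s) \<oplus> h s)" .
    have "(\<lambda>s. h d \<otimes> (u \<otimes> g s) \<oplus> h s) \<in> S \<rightarrow> I"
    proof
      fix s assume s: "s \<in> S"
      have "g s \<in> I" "h s \<in> I" using s g(1) h(1) by auto
      hence "u \<otimes> g s \<in> I" using ideal.I_l_closed[OF I_ideal] uc by simp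
      hence "h d \<otimes> (u \<otimes> g s) \<in> I" using ideal.I_l_closed[OF I_ideal] hdc by simp
      thus "h d \<otimes> (u \<otimes> g s) \<oplus> h s \<in> I"
        using \<open>h s \<in> I\<close> additive_subgroup.a_closed[OF ideal.axioms(1)[OF I_ideal]] by simp
    qed
    thus "\<exists>h\<in>S \<rightarrow> I. k = lc S h" using ke by blast
  qed
  moreover have "S \<subseteq> K" using insert(4) by simp
  ultimately show ?case using insert(3) by simp
qed

definition Kset :: "'a set" where "Kset = \<Inter> (range P)"

lemma K_ideal: "ideal Kset R"
  unfolding Kset_def by (rule i_Intersect) (use P_ideal in auto)

lemma K_sub: "Kset \<subseteq> P n"
  unfolding Kset_def by blast

lemma K_carr: "Kset \<subseteq> carrier R"
  using K_sub[of 0] by simp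

lemma krull: "Kset \<subseteq> {\<zero>}"
proof -
  obtain T where T: "T \<subseteq> carrier R" "finite T" "I = Idl T" using finetely_gen[OF I_ideal] by blast
  obtain S where S: "S \<subseteq> carrier R" "finite S" "Kset = Idl S" using finetely_gen[OF K_ideal] by blast
  define N where "N = ideal_prod R Kset I"
  have NL: "N = LCS S I" unfolding N_def S(3) by (rule LC[OF S(2) S(1) I_ideal])
  have Ni: "ideal N R" unfolding N_def by (rule ideal_prod_is_ideal[OF K_ideal I_ideal])
  have NK: "N \<subseteq> Kset" unfolding N_def using ideal_prod_inter[OF K_ideal I_ideal] by blast
  define F where "F = {L. ideal L R \<and> N \<subseteq> L \<and> L \<inter> Kset = N}"
  have NF: "N \<in> F" unfolding F_def using Ni NK by blast
  have FI: "F \<subseteq> {J. ideal J R}" unfolding F_def by (rule subsetI) simp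
  have FN: "F \<noteq> {}" using NF by force
  obtain L where L: "L \<in> F" "\<And>L'. L' \<in> F \<Longrightarrow> L \<subseteq> L' \<Longrightarrow> L' = L"
    using ex_max[OF FI FN] by metis
  have Li: "ideal L R" and NLs: "N \<subseteq> L" and LK: "L \<inter> Kset = N" using L(1) unfolding F_def by simp_all
  have Lc: "L \<subseteq> carrier R" using ideal.Icarr[OF Li] by blast
  have pw: "\<exists>k::nat. t [^] k \<in> L" if tT: "t \<in> T" for t
  proof -
    have tc: "t \<in> carrier R" using tT T(1) by blast
    have tI: "t \<in> I" using genideal_self[OF T(1)] tT T(3) by blast
    define A where "A = (\<lambda>k::nat. {r \<in> carrier R. t [^] k \<otimes> r \<in> L})"
    have Ai: "ideal (A k) R" for k unfolding A_def by (rule colon_ideal[OF Li nat_pow_closed[OF tc]])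
    have Amono: "A k \<subseteq> A (Suc k)" for k
    proof
      fix r assume "r \<in> A k"
      hence r: "r \<in> carrier R" "t [^] k \<otimes> r \<in> L" unfolding A_def by auto
      have "t [^] Suc k \<otimes> r = t \<otimes> (t [^] k \<otimes> r)"
        using r(1) tc nat_pow_closed[OF tc, of k] by (simp add: m_ac)
      moreover have "t \<otimes> (t [^] k \<otimes> r) \<in> L" using ideal.I_l_closed[OF Li r(2) tc] .
      ultimately show "r \<in> A (Suc k)" unfolding A_def using r(1) by simp
    qed
    have Amono': "k \<le> l \<Longrightarrow> A k \<subseteq> A l" for k l
      using lift_Suc_mono_le[of A, OF Amono] by blast
    have ch: "subset.chain {J. ideal J R} (range A)"
      unfolding pred_on.chain_def
    proof (intro conjI ballI)
      show "range A \<subseteq> {J. ideal J R}" using Ai by blast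
      fix X Y assume "X \<in> range A" "Y \<in> range A"
      then obtain k l where "X = A k" "Y = A l" by blast
      hence "X \<subseteq> Y \<or> Y \<subseteq> X" using Amono' nat_le_linear by metis
      thus "(\<subset>)\<^sup>=\<^sup>= X Y \<or> (\<subset>)\<^sup>=\<^sup>= Y X" by blast
    qed
    have "\<Union>(range A) \<in> range A" by (rule ideal_chain_is_trivial) (use ch in auto)
    then obtain k where k: "\<Union>(range A) = A k" by blast
    have stab: "A (Suc k) \<subseteq> A k" using k by blast
    define L' where "L' = L <+>\<^bsub>R\<^esub> PIdl (t [^] k)"
    have tkc: "t [^] k \<in> carrier R" using tc by simp
    have L'i: "ideal L' R" unfolding L'_def by (rule add_ideals[OF Li cgenideal_ideal[OF tkc]])
    have LL': "L \<subseteq> L'"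
    proof
      fix x assume x: "x \<in> L"
      have "x = x \<oplus> \<zero>" using x Lc by auto
      moreover have "\<zero> \<in> PIdl (t [^] k)"
        by (rule additive_subgroup.zero_closed[OF ideal.axioms(1)[OF cgenideal_ideal[OF tkc]]])
      ultimately show "x \<in> L'" unfolding L'_def using setadd_mem x by metis
    qed
    have "L' \<inter> Kset \<subseteq> N"
    proof
      fix y assume y: "y \<in> L' \<inter> Kset"
      obtain l v where lv: "l \<in> L" "v \<in> PIdl (t [^] k)" "y = l \<oplus> v"
        using y setadd_elim unfolding L'_def by blast
      obtain r where r: "r \<in> carrier R" "v = r \<otimes> t [^] k" using lv(2) unfolding cgenideal_def by blast
      have lc: "l \<in> carrier R" using lv(1) Lc by blast
      have yc: "y \<in> carrier R" using y K_carr by blast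
      have "y \<otimes> t \<in> N" unfolding N_def by (rule ideal_prod.prod) (use y tI in auto)
      hence "t \<otimes> y \<in> L" using NLs yc tc by (auto simp: m_comm)
      moreover have "t \<otimes> l \<in> L" using ideal.I_l_closed[OF Li lv(1) tc] .
      ultimately have "t \<otimes> y \<ominus> t \<otimes> l \<in> L"
        using additive_subgroup.a_closed[OF ideal.axioms(1)[OF Li]]
              additive_subgroup.a_inv_closed[OF ideal.axioms(1)[OF Li]] by (simp add: a_minus_def)
      moreover have "t \<otimes> y \<ominus> t \<otimes> l = t [^] Suc k \<otimes> r"
      proof -
        have e: "\<And>w. w \<in> carrier R \<Longrightarrow> t \<otimes> (l \<oplus> r \<otimes> w) \<ominus> t \<otimes> l = (w \<otimes> t) \<otimes> r"
          using tc lc r(1) by algebra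
        show ?thesis using e[OF tkc] lv(3) r(2) by simp
      qed
      ultimately have "r \<in> A (Suc k)" unfolding A_def using r(1) by simp
      hence "r \<in> A k" using stab by blast
      hence "t [^] k \<otimes> r \<in> L" unfolding A_def by simp
      hence "v \<in> L" using r tkc by (simp add: m_comm)
      hence "y \<in> L" using lv additive_subgroup.a_closed[OF ideal.axioms(1)[OF Li]] by simp
      thus "y \<in> N" using y LK by blast
    qed
    moreover have "N \<subseteq> L' \<inter> Kset" using NLs LL' NK by blast
    ultimately have "L' \<in> F" unfolding F_def using L'i NLs LL' by blast
    hence "L' = L" using L(2) LL' by blast
    moreover have "t [^] k \<in> L'"
    proof -
      have "t [^] k = \<zero> \<oplus> t [^] k" using tkc by simp
      moreover have "\<zero> \<in> L" by (rule additive_subgroup.zero_closed[OF ideal.axioms(1)[OF Li]])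
      ultimately show ?thesis unfolding L'_def using setadd_mem cgenideal_self[OF tkc] by metis
    qed
    ultimately show ?thesis by blast
  qed
  obtain m where m: "ideal_power R (Idl T) m \<subseteq> L"
    using pow_gen_sub[OF Li T(2) T(1)] pw by blast
  have "Kset \<subseteq> L" using K_sub[of m] m T(3) by simp
  hence KN: "Kset \<subseteq> N" using LK by blast
  have "\<forall>k\<in>Kset. \<exists>g\<in>S \<rightarrow> I. k = lc S g" using KN NL unfolding LCS_def by blast
  hence "\<forall>k\<in>Kset. k = \<zero>"
    using nak_ideal[OF K_carr S(2)] genideal_self[OF S(1)] S(3) by blast
  thus ?thesis by blast
qed

end

context cring
begin

definition lcf :: "'c set \<Rightarrow> ('c \<Rightarrow> 'a) \<Rightarrow> ('c \<Rightarrow> 'a) \<Rightarrow> 'a" where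
  "lcf G f v = (\<Oplus>e\<in>G. f e \<otimes> v e)"

lemma lcf_closed: "f \<in> G \<rightarrow> carrier R \<Longrightarrow> v \<in> G \<rightarrow> carrier R \<Longrightarrow> lcf G f v \<in> carrier R"
  unfolding lcf_def by (intro finsum_closed) (auto simp: Pi_def)

lemma lcf_add: "finite G \<Longrightarrow> f \<in> G \<rightarrow> carrier R \<Longrightarrow> g \<in> G \<rightarrow> carrier R \<Longrightarrow> v \<in> G \<rightarrow> carrier R \<Longrightarrow>
   lcf G f v \<oplus> lcf G g v = lcf G (\<lambda>e. f e \<oplus> g e) v"
proof -
  assume a: "finite G" "f \<in> G \<rightarrow> carrier R" "g \<in> G \<rightarrow> carrier R" "v \<in> G \<rightarrow> carrier R"
  have "(\<Oplus>e\<in>G. f e \<otimes> v e) \<oplus> (\<Oplus>e\<in>G. g e \<otimes> v e) = (\<Oplus>e\<in>G. f e \<otimes> v e \<oplus> g e \<otimes> v e)"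
    using a by (intro finsum_addf[symmetric]) (auto simp: Pi_def)
  also have "\<dots> = (\<Oplus>e\<in>G. (f e \<oplus> g e) \<otimes> v e)"
    using a by (intro finsum_cong') (auto simp: Pi_def l_distr)
  finally show ?thesis unfolding lcf_def .
qed

lemma lcf_smult: "finite G \<Longrightarrow> f \<in> G \<rightarrow> carrier R \<Longrightarrow> v \<in> G \<rightarrow> carrier R \<Longrightarrow> r \<in> carrier R \<Longrightarrow>
   r \<otimes> lcf G f v = lcf G (\<lambda>e. r \<otimes> f e) v"
proof -
  assume a: "finite G" "f \<in> G \<rightarrow> carrier R" "v \<in> G \<rightarrow> carrier R" "r \<in> carrier R"
  have "r \<otimes> (\<Oplus>e\<in>G. f e \<otimes> v e) = (\<Oplus>e\<in>G. r \<otimes> (f e \<otimes> v e))"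
    using a by (intro finsum_rdistr) (auto simp: Pi_def)
  also have "\<dots> = (\<Oplus>e\<in>G. (r \<otimes> f e) \<otimes> v e)"
    using a by (intro finsum_cong') (auto simp: Pi_def m_assoc)
  finally show ?thesis unfolding lcf_def .
qed

lemma lcf_zero: "v \<in> G \<rightarrow> carrier R \<Longrightarrow> lcf G (\<lambda>e. \<zero>) v = \<zero>"
proof -
  assume a: "v \<in> G \<rightarrow> carrier R"
  have "\<And>i. i \<in> G \<Longrightarrow> \<zero> \<otimes> v i = \<zero>" using a by (simp add: Pi_iff)
  hence "(\<Oplus>e\<in>G. \<zero> \<otimes> v e) = (\<Oplus>e\<in>G. \<zero>)"
    by (intro finsum_cong') auto
  thus ?thesis unfolding lcf_def by simp
qed

lemma lcf_insert:
  assumes "finite G" "d \<notin> G" "f \<in> insert d G \<rightarrow> carrier R" "v \<in> insert d G \<rightarrow> carrier R"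
  shows "lcf (insert d G) f v = f d \<otimes> v d \<oplus> lcf G f v"
  unfolding lcf_def using assms by (intro finsum_insert) (auto simp: Pi_def)

lemma lcf_cong: "(\<And>e. e \<in> G \<Longrightarrow> f e = f' e) \<Longrightarrow> (\<And>e. e \<in> G \<Longrightarrow> v e = v' e) \<Longrightarrow>
  f' \<in> G \<rightarrow> carrier R \<Longrightarrow> v' \<in> G \<rightarrow> carrier R \<Longrightarrow> lcf G f v = lcf G f' v'"
  unfolding lcf_def by (rule finsum_cong') (auto simp: Pi_iff)

end

context kset
begin

lemma rcos_mem: "a \<in> carrier R \<Longrightarrow> ideal J R \<Longrightarrow> a \<in> J +>\<^bsub>R\<^esub> a"
proof -
  assume a: "a \<in> carrier R" and J: "ideal J R"
  have "\<zero> \<in> J" by (rule additive_subgroup.zero_closed[OF ideal.axioms(1)[OF J]])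
  moreover have "a = \<zero> \<oplus> a" using a by simp
  ultimately show ?thesis unfolding a_r_coset_def' by blast
qed

lemma rcos_cg: "ideal J R \<Longrightarrow> a \<in> carrier R \<Longrightarrow> x \<in> J +>\<^bsub>R\<^esub> a \<Longrightarrow> cg J x a"
proof -
  assume J: "ideal J R" and a: "a \<in> carrier R" and x: "x \<in> J +>\<^bsub>R\<^esub> a"
  then obtain h where h: "h \<in> J" "x = h \<oplus> a" unfolding a_r_coset_def' by blast
  have hc: "h \<in> carrier R" using h(1) ideal.Icarr[OF J] by blast
  have "x \<ominus> a = h" using h(2) hc a by (simp add: a_minus_def a_assoc r_neg)
  thus ?thesis unfolding cg_def using h hc a by simp
qed

lemma rcos_eq_iff: "ideal J R \<Longrightarrow> a \<in> carrier R \<Longrightarrow> b \<in> carrier R \<Longrightarrow> (J +>\<^bsub>R\<^esub> a = J +>\<^bsub>R\<^esub> b) \<longleftrightarrow> cg J a b"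
proof
  assume J: "ideal J R" and a: "a \<in> carrier R" and b: "b \<in> carrier R"
  {
    assume "J +>\<^bsub>R\<^esub> a = J +>\<^bsub>R\<^esub> b"
    hence "a \<in> J +>\<^bsub>R\<^esub> b" using rcos_mem[OF a J] by simp
    thus "cg J a b" by (rule rcos_cg[OF J b])
  }
  {
    assume ab: "cg J a b"
    have ba: "cg J b a" by (rule cg_sym[OF J ab])
    have sub: "J +>\<^bsub>R\<^esub> x \<subseteq> J +>\<^bsub>R\<^esub> y" if xy: "cg J x y" for x y
    proof
      fix z assume z: "z \<in> J +>\<^bsub>R\<^esub> x"
      have xyc: "x \<in> carrier R" "y \<in> carrier R" "x \<ominus> y \<in> J" using xy unfolding cg_def by auto
      obtain h where h: "h \<in> J" "z = h \<oplus> x" using z unfolding a_r_coset_def' by blast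
      have hc: "h \<in> carrier R" using h(1) ideal.Icarr[OF J] by blast
      have "z = (h \<oplus> (x \<ominus> y)) \<oplus> y" using h(2) hc xyc by algebra
      moreover have "h \<oplus> (x \<ominus> y) \<in> J"
        using additive_subgroup.a_closed[OF ideal.axioms(1)[OF J] h(1) xyc(3)] .
      ultimately show "z \<in> J +>\<^bsub>R\<^esub> y" unfolding a_r_coset_def' by blast
    qed
    show "J +>\<^bsub>R\<^esub> a = J +>\<^bsub>R\<^esub> b" using sub[OF ab] sub[OF ba] by (rule equalityI)
  }
qed

lemma rcosets_rep: "ideal J R \<Longrightarrow> C \<in> a_rcosets\<^bsub>R\<^esub> J \<Longrightarrow> coset_rep C \<in> C \<and> coset_rep C \<in> carrier R \<and> C = J +>\<^bsub>R\<^esub> coset_rep C"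
proof -
  assume J: "ideal J R" and C: "C \<in> a_rcosets\<^bsub>R\<^esub> J"
  obtain a where a: "a \<in> carrier R" "C = J +>\<^bsub>R\<^esub> a" using C unfolding A_RCOSETS_def' by blast
  have "a \<in> C" using rcos_mem[OF a(1) J] a(2) by simp
  hence rC: "coset_rep C \<in> C" unfolding coset_rep_def by (rule someI)
  have cg: "cg J (coset_rep C) a" using rcos_cg[OF J a(1)] rC a(2) by simp
  hence rc: "coset_rep C \<in> carrier R" unfolding cg_def by simp
  have "J +>\<^bsub>R\<^esub> coset_rep C = J +>\<^bsub>R\<^esub> a" using rcos_eq_iff[OF J rc a(1)] cg by simp
  thus ?thesis using rC rc a(2) by simp
qed

definition Cau :: "(nat \<Rightarrow> 'a) \<Rightarrow> bool" where
  "Cau s \<longleftrightarrow> (\<forall>n. s n \<in> carrier R \<and> cg (P n) (s (Suc n)) (s n))"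

definition sim :: "(nat \<Rightarrow> 'a) \<Rightarrow> (nat \<Rightarrow> 'a) \<Rightarrow> bool" where
  "sim s t \<longleftrightarrow> (\<forall>n. cg (P n) (s n) (t n))"

lemma sim_trans: "sim a b \<Longrightarrow> sim b c \<Longrightarrow> sim a c"
  unfolding sim_def using cg_trans[OF P_ideal] by blast

lemma sim_sym: "sim a b \<Longrightarrow> sim b a"
  unfolding sim_def using cg_sym[OF P_ideal] by blast

lemma Cau_le: assumes s: "Cau s" shows "n \<le> m \<Longrightarrow> cg (P n) (s m) (s n)"
proof (induct m rule: dec_induct)
  case base thus ?case using s unfolding Cau_def by (simp add: cg_refl P_ideal)
next
  case (step m)
  have "cg (P m) (s (Suc m)) (s m)" using s unfolding Cau_def by simp
  hence "cg (P n) (s (Suc m)) (s m)" using P_mono[OF step(1)] by (rule cg_mono)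
  thus ?case using step(3) cg_trans[OF P_ideal] by blast
qed

lemma completion_rep:
  assumes x: "x \<in> adic_completion R I"
  shows "Cau (\<lambda>n. coset_rep (x n)) \<and> (\<forall>n. x n = P n +>\<^bsub>R\<^esub> coset_rep (x n))"
proof -
  have xn: "x n \<in> a_rcosets\<^bsub>R\<^esub> (P n)" for n using x unfolding adic_completion_def by blast
  have xs: "x (Suc n) \<subseteq> x n" for n using x unfolding adic_completion_def by blast
  note rr = rcosets_rep[OF P_ideal xn]
  have "cg (P n) (coset_rep (x (Suc n))) (coset_rep (x n))" for n
  proof -
    have "coset_rep (x (Suc n)) \<in> x n" using rr[of "Suc n"] xs[of n] by blast
    hence "coset_rep (x (Suc n)) \<in> P n +>\<^bsub>R\<^esub> coset_rep (x n)" using rr[of n] by simp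
    thus ?thesis using rcos_cg[OF P_ideal] rr[of n] by blast
  qed
  thus ?thesis unfolding Cau_def using rr by blast
qed

definition Xs :: "(nat \<Rightarrow> 'a) \<Rightarrow> nat \<Rightarrow> 'a set" where
  "Xs s = (\<lambda>n. P n +>\<^bsub>R\<^esub> s n)"

lemma Xs_in:
  assumes s: "Cau s" shows "Xs s \<in> adic_completion R I"
proof -
  have sc: "s n \<in> carrier R" for n using s unfolding Cau_def by blast
  have "Xs s n \<in> a_rcosets\<^bsub>R\<^esub> (P n)" for n
    unfolding Xs_def A_RCOSETS_def' using sc by blast
  moreover have "Xs s (Suc n) \<subseteq> Xs s n" for n
  proof -
    have "Xs s (Suc n) \<subseteq> P n +>\<^bsub>R\<^esub> s (Suc n)"
      unfolding Xs_def a_r_coset_def' using P_Suc_sub[of n] by blast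
    also have "\<dots> = P n +>\<^bsub>R\<^esub> s n"
      using rcos_eq_iff[OF P_ideal sc sc] s unfolding Cau_def by blast
    finally show ?thesis unfolding Xs_def by simp
  qed
  ultimately show ?thesis unfolding adic_completion_def by blast
qed

lemma phi_in:
  assumes r: "r \<in> carrier R" shows "completion_map R I r \<in> adic_completion R I"
proof -
  have "Cau (\<lambda>n. r)" unfolding Cau_def using r by (simp add: cg_refl P_ideal)
  hence "Xs (\<lambda>n. r) \<in> adic_completion R I" by (rule Xs_in)
  thus ?thesis unfolding Xs_def completion_map_def by simp
qed

end

context cring
begin

lemma lc_cong: "(\<And>t. t \<in> T \<Longrightarrow> g t = g' t) \<Longrightarrow> T \<subseteq> carrier R \<Longrightarrow> g' \<in> T \<rightarrow> carrier R \<Longrightarrow> lc T g = lc T g'"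
  unfolding lc_def by (rule finsum_cong') (auto simp: Pi_iff)

end

context kset
begin

lemma cg_sub: "ideal J R \<Longrightarrow> cg J a b \<Longrightarrow> k \<in> carrier R \<Longrightarrow> cg J (a \<ominus> k) (b \<ominus> k)"
  unfolding a_minus_def using cg_add cg_refl by (metis a_inv_closed)

lemma dec:
  assumes T: "finite T" "T \<subseteq> carrier R" "I = Idl T" and z: "Cau z" "z 1 \<in> I"
  shows "\<exists>Y. (\<forall>t\<in>T. Cau (Y t)) \<and> sim z (\<lambda>n. lc T (\<lambda>t. Y t n))"
proof -
  have zc: "z n \<in> carrier R" for n using z(1) unfolding Cau_def by blast
  define u where "u = (\<lambda>k::nat. if k = 0 then z 1 else z (Suc k) \<ominus> z k)"
  have LCk: "P (Suc j) = LCS T (P j)" for j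
    using LC[OF T(1) T(2) P_ideal[of j]] T(3) by simp
  have uP: "u k \<in> P (Suc (k - 1))" for k
  proof (cases "k = 0")
    case True thus ?thesis unfolding u_def using z(2) P_one by simp
  next
    case False
    have "cg (P k) (z (Suc k)) (z k)" using z(1) unfolding Cau_def by blast
    hence "z (Suc k) \<ominus> z k \<in> P k" unfolding cg_def by simp
    thus ?thesis unfolding u_def using False by simp
  qed
  have "\<forall>k. \<exists>b. b \<in> T \<rightarrow> P (k - 1) \<and> u k = lc T b"
    using uP unfolding LCk LCS_def by blast
  then obtain B where B: "\<And>k. B k \<in> T \<rightarrow> P (k - 1)" "\<And>k. u k = lc T (B k)"
    by metis
  have Bc: "B k t \<in> carrier R" if "t \<in> T" for k t using B(1)[of k] that P_carr by blast
  have BcT: "B k \<in> T \<rightarrow> carrier R" for k using Bc by blast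
  define Y where "Y = (\<lambda>t n. finsum R (\<lambda>k. B k t) {..n})"
  have Yc: "Y t n \<in> carrier R" if "t \<in> T" for t n
    unfolding Y_def by (rule finsum_closed) (use Bc that in blast)
  have YS: "Y t (Suc n) = B (Suc n) t \<oplus> Y t n" if "t \<in> T" for t n
    unfolding Y_def by (rule finsum_Suc) (use Bc that in blast)
  have Y0: "Y t 0 = B 0 t" if "t \<in> T" for t
    unfolding Y_def by (rule finsum_0) (use Bc that in blast)
  have YCau: "Cau (Y t)" if t: "t \<in> T" for t
    unfolding Cau_def
  proof (intro allI conjI)
    fix n
    show "Y t n \<in> carrier R" using Yc[OF t] .
    have "B (Suc n) t \<in> P n" using B(1)[of "Suc n"] t by auto
    moreover have "(B (Suc n) t \<oplus> Y t n) \<ominus> Y t n = B (Suc n) t"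
      using Bc[OF t] Yc[OF t] by algebra
    ultimately show "cg (P n) (Y t (Suc n)) (Y t n)"
      unfolding cg_def using YS[OF t] Yc[OF t] Bc[OF t] by simp
  qed
  have YcT: "(\<lambda>t. Y t n) \<in> T \<rightarrow> carrier R" for n using Yc by blast
  have sumY: "lc T (\<lambda>t. Y t n) = z (Suc n)" for n
  proof (induct n)
    case 0
    have "lc T (\<lambda>t. Y t 0) = lc T (B 0)" using Y0 by (rule lc_cong[OF _ T(2) BcT])
    also have "\<dots> = u 0" using B(2) by simp
    finally show ?case unfolding u_def by simp
  next
    case (Suc n)
    have "lc T (\<lambda>t. Y t (Suc n)) = lc T (\<lambda>t. B (Suc n) t \<oplus> Y t n)"
      by (rule lc_cong[OF _ T(2)]) (use YS Bc Yc in auto)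
    also have "\<dots> = lc T (B (Suc n)) \<oplus> lc T (\<lambda>t. Y t n)"
      using lc_add[OF T(1) T(2) BcT YcT] by simp
    also have "\<dots> = (z (Suc (Suc n)) \<ominus> z (Suc n)) \<oplus> z (Suc n)"
      using B(2)[of "Suc n"] Suc unfolding u_def by simp
    also have "\<dots> = z (Suc (Suc n))" using zc[of "Suc n"] zc[of "Suc (Suc n)"] by algebra
    finally show ?case .
  qed
  have "sim z (\<lambda>n. lc T (\<lambda>t. Y t n))"
    unfolding sim_def sumY
  proof
    fix n
    have "cg (P n) (z (Suc n)) (z n)" using z(1) unfolding Cau_def by blast
    thus "cg (P n) (z n) (z (Suc n))" by (rule cg_sym[OF P_ideal])
  qed
  thus ?thesis using YCau by blast
qed

end

context cring
begin

lemma alg_w3: "r \<in> carrier R \<Longrightarrow> r' \<in> carrier R \<Longrightarrow> x \<in> carrier R \<Longrightarrow> y \<in> carrier R \<Longrightarrow>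
  (r \<oplus> x) \<oplus> (r' \<oplus> y) = (r \<oplus> r') \<oplus> (x \<oplus> y)" by algebra
lemma alg_w4: "r \<in> carrier R \<Longrightarrow> x \<in> carrier R \<Longrightarrow> t \<in> carrier R \<Longrightarrow>
  (r \<oplus> x) \<otimes> t = r \<otimes> t \<oplus> t \<otimes> x" by algebra
lemma alg_e1: "a \<in> carrier R \<Longrightarrow> k \<in> carrier R \<Longrightarrow> (a \<ominus> k) \<oplus> k = a" by algebra
lemma alg_e2: "r \<in> carrier R \<Longrightarrow> x \<in> carrier R \<Longrightarrow> y \<in> carrier R \<Longrightarrow> k \<in> carrier R \<Longrightarrow>
  (r \<oplus> (x \<oplus> y)) \<oplus> k = x \<oplus> ((r \<oplus> k) \<oplus> y)" by algebra
lemma alg_e3: "a \<in> carrier R \<Longrightarrow> g \<in> carrier R \<Longrightarrow> a \<oplus> \<ominus> (g \<otimes> a) = (\<one> \<ominus> g) \<otimes> a" by algebra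
lemma alg_e4: "x \<in> carrier R \<Longrightarrow> y \<in> carrier R \<Longrightarrow> (x \<oplus> y) \<oplus> \<ominus> x = y" by algebra
lemma alg_e6: "u \<in> carrier R \<Longrightarrow> x \<in> carrier R \<Longrightarrow> y \<in> carrier R \<Longrightarrow> u \<otimes> (x \<oplus> y) = u \<otimes> x \<oplus> u \<otimes> y" by algebra
lemma alg_q1: "r \<in> carrier R \<Longrightarrow> f \<in> carrier R \<Longrightarrow> x \<in> carrier R \<Longrightarrow> y \<in> carrier R \<Longrightarrow> z \<in> carrier R \<Longrightarrow>
  r \<oplus> (f \<otimes> (x \<oplus> y) \<oplus> z) = (r \<oplus> f \<otimes> x) \<oplus> (f \<otimes> y \<oplus> z)" by algebra

end

context kset
begin

definition comb :: "'c set \<Rightarrow> ('c \<Rightarrow> nat \<Rightarrow> 'a) \<Rightarrow> 'a \<Rightarrow> ('c \<Rightarrow> 'a) \<Rightarrow> nat \<Rightarrow> 'a" where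
  "comb G c r f n = r \<oplus> lcf G f (\<lambda>e. c e n)"

definition Qp :: "'c set \<Rightarrow> ('c \<Rightarrow> nat \<Rightarrow> 'a) \<Rightarrow> bool" where
  "Qp G c \<longleftrightarrow> (\<forall>s. Cau s \<longrightarrow> (\<exists>r\<in>carrier R. \<exists>f\<in>G \<rightarrow> carrier R. sim s (comb G c r f)))"

lemma nak_step:
  fixes c :: "'c \<Rightarrow> nat \<Rightarrow> 'a"
  assumes T: "finite T" "T \<subseteq> carrier R" "I = Idl T"
    and G: "finite G" "d \<notin> G" and Cc: "\<forall>e\<in>insert d G. Cau (c e)" and Q: "Qp (insert d G) c"
  shows "Qp G c"
proof -
  let ?G = "insert d G"
  have fG: "finite ?G" using G by simp
  have Ic: "I \<subseteq> carrier R" using ideal.Icarr[OF I_ideal] by blast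
  have cc: "c e n \<in> carrier R" if "e \<in> ?G" for e n using Cc that unfolding Cau_def by blast
  have ccG: "(\<lambda>e. c e n) \<in> ?G \<rightarrow> carrier R" for n using cc by blast
  have ccG': "(\<lambda>e. c e n) \<in> G \<rightarrow> carrier R" for n using cc by blast
  define W where "W = (\<lambda>s. \<exists>r\<in>carrier R. \<exists>g\<in>?G \<rightarrow> I. sim s (comb ?G c r g))"
  have w1: "W s" if "sim s s'" "W s'" for s s'
    using that sim_trans unfolding W_def by blast
  have w2: "W (\<lambda>n. \<zero>)"
  proof -
    have "comb ?G c \<zero> (\<lambda>e. \<zero>) n = \<zero>" for n
      unfolding comb_def using lcf_zero[OF ccG] by simp
    hence "sim (\<lambda>n. \<zero>) (comb ?G c \<zero> (\<lambda>e. \<zero>))" unfolding sim_def using cg_refl[OF P_ideal] by simp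
    moreover have "(\<lambda>e. \<zero>) \<in> ?G \<rightarrow> I"
      using additive_subgroup.zero_closed[OF ideal.axioms(1)[OF I_ideal]] by blast
    ultimately show ?thesis unfolding W_def by blast
  qed
  have w3: "W (\<lambda>n. s n \<oplus> s' n)" if A: "W s" "W s'" for s s'
  proof -
    obtain r g where rg: "r \<in> carrier R" "g \<in> ?G \<rightarrow> I" "sim s (comb ?G c r g)" using A(1) unfolding W_def by blast
    obtain r' g' where rg': "r' \<in> carrier R" "g' \<in> ?G \<rightarrow> I" "sim s' (comb ?G c r' g')" using A(2) unfolding W_def by blast
    have gc: "g \<in> ?G \<rightarrow> carrier R" "g' \<in> ?G \<rightarrow> carrier R" using rg(2) rg'(2) Ic by blast+
    have e: "comb ?G c r g n \<oplus> comb ?G c r' g' n = comb ?G c (r \<oplus> r') (\<lambda>e. g e \<oplus> g' e) n" for n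
    proof -
      have L1: "lcf ?G g (\<lambda>e. c e n) \<in> carrier R" using lcf_closed[OF gc(1) ccG] .
      have L2: "lcf ?G g' (\<lambda>e. c e n) \<in> carrier R" using lcf_closed[OF gc(2) ccG] .
      have "comb ?G c r g n \<oplus> comb ?G c r' g' n = (r \<oplus> r') \<oplus> (lcf ?G g (\<lambda>e. c e n) \<oplus> lcf ?G g' (\<lambda>e. c e n))"
        unfolding comb_def using alg_w3[OF rg(1) rg'(1) L1 L2] .
      also have "\<dots> = comb ?G c (r \<oplus> r') (\<lambda>e. g e \<oplus> g' e) n"
        unfolding comb_def using lcf_add[OF fG gc(1) gc(2) ccG] by simp
      finally show ?thesis .
    qed
    have "sim (\<lambda>n. s n \<oplus> s' n) (comb ?G c (r \<oplus> r') (\<lambda>e. g e \<oplus> g' e))"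
      unfolding sim_def
    proof
      fix n
      have "cg (P n) (s n \<oplus> s' n) (comb ?G c r g n \<oplus> comb ?G c r' g' n)"
        using cg_add[OF P_ideal] rg(3) rg'(3) unfolding sim_def by blast
      thus "cg (P n) (s n \<oplus> s' n) (comb ?G c (r \<oplus> r') (\<lambda>e. g e \<oplus> g' e) n)" using e by simp
    qed
    moreover have "(\<lambda>e. g e \<oplus> g' e) \<in> ?G \<rightarrow> I"
      using rg(2) rg'(2) additive_subgroup.a_closed[OF ideal.axioms(1)[OF I_ideal]] by (simp add: Pi_iff)
    moreover have "r \<oplus> r' \<in> carrier R" using rg(1) rg'(1) by simp
    ultimately show ?thesis unfolding W_def by blast
  qed
  have w4: "W (\<lambda>n. s n \<otimes> t)" if s: "Cau s" and t: "t \<in> I" for s t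
  proof -
    have tc: "t \<in> carrier R" using t Ic by blast
    obtain r f where rf: "r \<in> carrier R" "f \<in> ?G \<rightarrow> carrier R" "sim s (comb ?G c r f)"
      using Q s unfolding Qp_def by blast
    have e: "comb ?G c r f n \<otimes> t = comb ?G c (r \<otimes> t) (\<lambda>e. t \<otimes> f e) n" for n
    proof -
      have L: "lcf ?G f (\<lambda>e. c e n) \<in> carrier R" using lcf_closed[OF rf(2) ccG] .
      have "comb ?G c r f n \<otimes> t = r \<otimes> t \<oplus> t \<otimes> lcf ?G f (\<lambda>e. c e n)"
        unfolding comb_def using alg_w4[OF rf(1) L tc] .
      also have "\<dots> = comb ?G c (r \<otimes> t) (\<lambda>e. t \<otimes> f e) n"
        unfolding comb_def using lcf_smult[OF fG rf(2) ccG tc] by simp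
      finally show ?thesis .
    qed
    have "sim (\<lambda>n. s n \<otimes> t) (comb ?G c (r \<otimes> t) (\<lambda>e. t \<otimes> f e))"
      unfolding sim_def
    proof
      fix n
      have "cg (P n) (s n \<otimes> t) (comb ?G c r f n \<otimes> t)"
        using cg_mult[OF P_ideal] rf(3) cg_refl[OF P_ideal tc] unfolding sim_def by blast
      thus "cg (P n) (s n \<otimes> t) (comb ?G c (r \<otimes> t) (\<lambda>e. t \<otimes> f e) n)" using e by simp
    qed
    moreover have "(\<lambda>e. t \<otimes> f e) \<in> ?G \<rightarrow> I"
      using rf(2) t ideal.I_r_closed[OF I_ideal] by (simp add: Pi_iff)
    moreover have "r \<otimes> t \<in> carrier R" using rf(1) tc by simp
    ultimately show ?thesis unfolding W_def by blast
  qed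
  have w5: "finite T' \<Longrightarrow> T' \<subseteq> I \<Longrightarrow> (\<forall>t\<in>T'. Cau (Y t)) \<Longrightarrow> W (\<lambda>n. lc T' (\<lambda>t. Y t n))" for T' Y
  proof (induct T' rule: finite_induct)
    case empty thus ?case using w2 by (simp add: lc_empty)
  next
    case (insert t T')
    have iT: "insert t T' \<subseteq> carrier R" using insert(4) Ic by blast
    have Yc: "(\<lambda>t. Y t n) \<in> insert t T' \<rightarrow> carrier R" for n using insert(5) unfolding Cau_def by blast
    have "W (\<lambda>n. Y t n \<otimes> t \<oplus> lc T' (\<lambda>t. Y t n))"
      by (rule w3[OF w4]) (use insert in auto)
    moreover have "(\<lambda>n. lc (insert t T') (\<lambda>t. Y t n)) = (\<lambda>n. Y t n \<otimes> t \<oplus> lc T' (\<lambda>t. Y t n))"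
      using lc_insert[OF insert(1) insert(2) iT Yc] by simp
    ultimately show ?case by simp
  qed
  define z where "z = (\<lambda>n. c d n \<ominus> c d 1)"
  have dG: "d \<in> ?G" by simp
  have zCau: "Cau z" unfolding Cau_def z_def
  proof (intro allI conjI)
    fix n
    show "c d n \<ominus> c d 1 \<in> carrier R" using cc[OF dG] by simp
    have "cg (P n) (c d (Suc n)) (c d n)" using Cc unfolding Cau_def by blast
    thus "cg (P n) (c d (Suc n) \<ominus> c d 1) (c d n \<ominus> c d 1)" using cg_sub[OF P_ideal] cc[OF dG] by blast
  qed
  have z1: "z 1 \<in> I"
  proof -
    have "z 1 = \<zero>" unfolding z_def using cc[OF dG, of 1] by (simp add: a_minus_def r_neg)
    thus ?thesis using additive_subgroup.zero_closed[OF ideal.axioms(1)[OF I_ideal]] by simp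
  qed
  obtain Y where Y: "\<forall>t\<in>T. Cau (Y t)" "sim z (\<lambda>n. lc T (\<lambda>t. Y t n))" using dec[OF T zCau z1] by blast
  have TI: "T \<subseteq> I" using genideal_self[OF T(2)] T(3) by simp
  have "W z" by (rule w1[OF Y(2) w5[OF T(1) TI Y(1)]])
  then obtain r g where rg: "r \<in> carrier R" "g \<in> ?G \<rightarrow> I" "sim z (comb ?G c r g)" unfolding W_def by blast
  have gc: "g \<in> ?G \<rightarrow> carrier R" using rg(2) Ic by blast
  have gcG: "g \<in> G \<rightarrow> carrier R" using gc by blast
  have gdI: "g d \<in> I" using rg(2) by blast
  have gdc: "g d \<in> carrier R" using gdI Ic by blast
  have U: "\<one> \<ominus> g d \<in> Units R" by (rule one_minus_unit[OF gdI])
  define u where "u = inv (\<one> \<ominus> g d)"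
  have uc: "u \<in> carrier R" unfolding u_def using U by simp
  have ui: "u \<otimes> (\<one> \<ominus> g d) = \<one>" unfolding u_def using U by simp
  define r1 where "r1 = u \<otimes> (r \<oplus> c d 1)"
  define g1 where "g1 = (\<lambda>e. u \<otimes> g e)"
  have r1c: "r1 \<in> carrier R" unfolding r1_def using uc rg(1) cc[OF dG] by simp
  have g1c: "g1 \<in> G \<rightarrow> carrier R" unfolding g1_def using uc gcG by (simp add: Pi_iff)
  have D: "cg (P n) (c d n) (comb G c r1 g1 n)" for n
  proof -
    let ?J = "P n"
    have J: "ideal ?J R" by (rule P_ideal)
    let ?a = "c d n" and ?k = "c d 1" and ?\<sigma> = "lcf G g (\<lambda>e. c e n)"
    have ac: "?a \<in> carrier R" "?k \<in> carrier R" using cc[OF dG] by auto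
    have \<sigma>c: "?\<sigma> \<in> carrier R" using lcf_closed[OF gcG ccG'] .
    have "comb ?G c r g n = r \<oplus> (g d \<otimes> ?a \<oplus> ?\<sigma>)"
      unfolding comb_def using lcf_insert[OF G(1) G(2) gc ccG] by simp
    hence c1: "cg ?J (?a \<ominus> ?k) (r \<oplus> (g d \<otimes> ?a \<oplus> ?\<sigma>))" using rg(3) unfolding sim_def z_def by metis
    have c2: "cg ?J ((?a \<ominus> ?k) \<oplus> ?k) ((r \<oplus> (g d \<otimes> ?a \<oplus> ?\<sigma>)) \<oplus> ?k)"
      by (rule cg_add[OF J c1 cg_refl[OF J ac(2)]])
    have e1: "(?a \<ominus> ?k) \<oplus> ?k = ?a" using alg_e1[OF ac] .
    have e2: "(r \<oplus> (g d \<otimes> ?a \<oplus> ?\<sigma>)) \<oplus> ?k = g d \<otimes> ?a \<oplus> ((r \<oplus> ?k) \<oplus> ?\<sigma>)"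
      using alg_e2[OF rg(1) _ \<sigma>c ac(2)] ac gdc by simp
    have c3: "cg ?J ?a (g d \<otimes> ?a \<oplus> ((r \<oplus> ?k) \<oplus> ?\<sigma>))" using c2 e1 e2 by simp
    have c4: "cg ?J (?a \<oplus> \<ominus> (g d \<otimes> ?a)) ((g d \<otimes> ?a \<oplus> ((r \<oplus> ?k) \<oplus> ?\<sigma>)) \<oplus> \<ominus> (g d \<otimes> ?a))"
      by (rule cg_add[OF J c3 cg_refl[OF J]]) (use ac gdc in simp)
    have e3: "?a \<oplus> \<ominus> (g d \<otimes> ?a) = (\<one> \<ominus> g d) \<otimes> ?a" using alg_e3[OF ac(1) gdc] .
    have e4: "(g d \<otimes> ?a \<oplus> ((r \<oplus> ?k) \<oplus> ?\<sigma>)) \<oplus> \<ominus> (g d \<otimes> ?a) = (r \<oplus> ?k) \<oplus> ?\<sigma>"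
      using alg_e4 ac rg(1) gdc \<sigma>c by simp
    have c5: "cg ?J ((\<one> \<ominus> g d) \<otimes> ?a) ((r \<oplus> ?k) \<oplus> ?\<sigma>)" using c4 e3 e4 by simp
    have c6: "cg ?J (u \<otimes> ((\<one> \<ominus> g d) \<otimes> ?a)) (u \<otimes> ((r \<oplus> ?k) \<oplus> ?\<sigma>))"
      by (rule cg_mult[OF J cg_refl[OF J uc] c5])
    have e5: "u \<otimes> ((\<one> \<ominus> g d) \<otimes> ?a) = ?a"
    proof -
      have "u \<otimes> ((\<one> \<ominus> g d) \<otimes> ?a) = (u \<otimes> (\<one> \<ominus> g d)) \<otimes> ?a" using uc gdc ac by (simp add: m_assoc)
      thus ?thesis using ui ac by simp
    qed
    have e6: "u \<otimes> ((r \<oplus> ?k) \<oplus> ?\<sigma>) = r1 \<oplus> u \<otimes> ?\<sigma>"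
      unfolding r1_def using alg_e6 uc rg(1) ac \<sigma>c by simp
    have e7: "u \<otimes> ?\<sigma> = lcf G g1 (\<lambda>e. c e n)"
      unfolding g1_def using lcf_smult[OF G(1) gcG ccG' uc] .
    show ?thesis using c6 e5 e6 e7 unfolding comb_def by simp
  qed
  show "Qp G c" unfolding Qp_def
  proof (intro allI impI)
    fix s assume s: "Cau s"
    obtain r0 f where rf: "r0 \<in> carrier R" "f \<in> ?G \<rightarrow> carrier R" "sim s (comb ?G c r0 f)"
      using Q s unfolding Qp_def by blast
    have fG: "f \<in> G \<rightarrow> carrier R" using rf(2) by blast
    have fdc: "f d \<in> carrier R" using rf(2) by blast
    define r2 where "r2 = r0 \<oplus> f d \<otimes> r1"
    define f2 where "f2 = (\<lambda>e. f d \<otimes> g1 e \<oplus> f e)"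
    have f2c: "f2 \<in> G \<rightarrow> carrier R" unfolding f2_def using fdc g1c fG by (simp add: Pi_iff)
    have "sim s (comb G c r2 f2)" unfolding sim_def
    proof
      fix n
      let ?J = "P n"
      have J: "ideal ?J R" by (rule P_ideal)
      let ?a = "c d n" and ?\<tau> = "lcf G f (\<lambda>e. c e n)" and ?\<rho> = "lcf G g1 (\<lambda>e. c e n)"
      have ac: "?a \<in> carrier R" using cc[OF dG] by simp
      have \<tau>c: "?\<tau> \<in> carrier R" using lcf_closed[OF fG ccG'] .
      have \<rho>c: "?\<rho> \<in> carrier R" using lcf_closed[OF g1c ccG'] .
      have c1: "cg ?J (s n) (r0 \<oplus> (f d \<otimes> ?a \<oplus> ?\<tau>))"
        using rf(3) lcf_insert[OF G(1) G(2) rf(2) ccG] unfolding sim_def comb_def by metis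
      have c2: "cg ?J (r0 \<oplus> (f d \<otimes> ?a \<oplus> ?\<tau>)) (r0 \<oplus> (f d \<otimes> (r1 \<oplus> ?\<rho>) \<oplus> ?\<tau>))"
      proof -
        have "cg ?J ?a (r1 \<oplus> ?\<rho>)" using D[of n] unfolding comb_def .
        hence "cg ?J (f d \<otimes> ?a) (f d \<otimes> (r1 \<oplus> ?\<rho>))" by (rule cg_mult[OF J cg_refl[OF J fdc]])
        hence "cg ?J (f d \<otimes> ?a \<oplus> ?\<tau>) (f d \<otimes> (r1 \<oplus> ?\<rho>) \<oplus> ?\<tau>)" by (rule cg_add[OF J _ cg_refl[OF J \<tau>c]])
        thus ?thesis by (rule cg_add[OF J cg_refl[OF J rf(1)]])
      qed
      have e1: "r0 \<oplus> (f d \<otimes> (r1 \<oplus> ?\<rho>) \<oplus> ?\<tau>) = r2 \<oplus> (f d \<otimes> ?\<rho> \<oplus> ?\<tau>)"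
        unfolding r2_def using alg_q1[OF rf(1) fdc r1c \<rho>c \<tau>c] .
      have e2: "f d \<otimes> ?\<rho> \<oplus> ?\<tau> = lcf G f2 (\<lambda>e. c e n)"
      proof -
        have g1f: "(\<lambda>e. f d \<otimes> g1 e) \<in> G \<rightarrow> carrier R" using fdc g1c by (simp add: Pi_iff)
        have "f d \<otimes> ?\<rho> = lcf G (\<lambda>e. f d \<otimes> g1 e) (\<lambda>e. c e n)" using lcf_smult[OF G(1) g1c ccG' fdc] .
        moreover have "lcf G (\<lambda>e. f d \<otimes> g1 e) (\<lambda>e. c e n) \<oplus> ?\<tau> = lcf G f2 (\<lambda>e. c e n)"
          unfolding f2_def using lcf_add[OF G(1) g1f fG ccG'] .
        ultimately show ?thesis by simp
      qed
      show "cg ?J (s n) (comb G c r2 f2 n)"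
        using cg_trans[OF J c1 c2] e1 e2 unfolding comb_def by simp
    qed
    moreover have "r2 \<in> carrier R" unfolding r2_def using rf(1) fdc r1c by simp
    ultimately show "\<exists>r\<in>carrier R. \<exists>f\<in>G \<rightarrow> carrier R. sim s (comb G c r f)" using f2c by blast
  qed
qed

lemma nak_seq:
  fixes c :: "'c \<Rightarrow> nat \<Rightarrow> 'a"
  assumes T: "finite T" "T \<subseteq> carrier R" "I = Idl T"
  shows "finite G \<Longrightarrow> (\<forall>e\<in>G. Cau (c e)) \<Longrightarrow> Qp G c \<Longrightarrow> Qp {} c"
proof (induct G rule: finite_induct)
  case empty thus ?case by simp
next
  case (insert d G)
  have "Qp G c" by (rule nak_step[OF T insert(1) insert(2) insert(4) insert(5)])
  thus ?case using insert(3) insert(4) by simp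
qed

end

context kset
begin

lemma phi_inj: "inj_on (completion_map R I) (carrier R)"
proof (rule inj_onI)
  fix r r' assume r: "r \<in> carrier R" and r': "r' \<in> carrier R"
    and e: "completion_map R I r = completion_map R I r'"
  have "cg (P n) r r'" for n
  proof -
    have "P n +>\<^bsub>R\<^esub> r = P n +>\<^bsub>R\<^esub> r'" using e unfolding completion_map_def by meson
    thus ?thesis using rcos_eq_iff[OF P_ideal r r'] by simp
  qed
  hence "r \<ominus> r' \<in> Kset" unfolding Kset_def cg_def by blast
  hence z: "r \<ominus> r' = \<zero>" using krull by blast
  have "r = (r \<ominus> r') \<oplus> r'" using r r' by algebra
  thus "r = r'" using z r' by simp
qed

lemma phi_surj:
  assumes fg: "completion_fin_gen R I" and x: "x \<in> adic_completion R I"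
  shows "\<exists>r\<in>carrier R. x = completion_map R I r"
proof -
  obtain T where T: "T \<subseteq> carrier R" "finite T" "I = Idl T" using finetely_gen[OF I_ideal] by blast
  from fg obtain E where E0: "finite E \<and> E \<subseteq> adic_completion R I \<and>
    (\<forall>y \<in> adic_completion R I. \<exists>f. f \<in> E \<rightarrow> carrier R \<and>
        (\<forall>n. y n = P n +>\<^bsub>R\<^esub> (finsum R (\<lambda>e. f e \<otimes> coset_rep (e n)) E)))"
    unfolding completion_fin_gen_def by (rule exE)
  have E: "finite E" "E \<subseteq> adic_completion R I"
    "\<And>y. y \<in> adic_completion R I \<Longrightarrow> \<exists>f. f \<in> E \<rightarrow> carrier R \<and>
        (\<forall>n. y n = P n +>\<^bsub>R\<^esub> (finsum R (\<lambda>e. f e \<otimes> coset_rep (e n)) E))"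
    using E0 by auto
  define c :: "(nat \<Rightarrow> 'a set) \<Rightarrow> nat \<Rightarrow> 'a" where "c = (\<lambda>e n. coset_rep (e n))"
  have Cc: "\<forall>e\<in>E. Cau (c e)" unfolding c_def using completion_rep E(2) by blast
  have cc: "(\<lambda>e. c e n) \<in> E \<rightarrow> carrier R" for n using Cc unfolding Cau_def by blast
  have "Qp E c" unfolding Qp_def
  proof (intro allI impI)
    fix s assume s: "Cau s"
    have sc: "s n \<in> carrier R" for n using s unfolding Cau_def by blast
    obtain f where f: "f \<in> E \<rightarrow> carrier R" "\<forall>n. Xs s n = P n +>\<^bsub>R\<^esub> (finsum R (\<lambda>e. f e \<otimes> coset_rep (e n)) E)"
      using E(3)[OF Xs_in[OF s]] by blast
    have "sim s (comb E c \<zero> f)" unfolding sim_def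
    proof
      fix n
      have L: "lcf E f (\<lambda>e. c e n) \<in> carrier R" using lcf_closed[OF f(1) cc] .
      have "P n +>\<^bsub>R\<^esub> s n = P n +>\<^bsub>R\<^esub> lcf E f (\<lambda>e. c e n)"
        using f(2) unfolding Xs_def lcf_def c_def by meson
      hence "cg (P n) (s n) (lcf E f (\<lambda>e. c e n))" using rcos_eq_iff[OF P_ideal sc L] by simp
      thus "cg (P n) (s n) (comb E c \<zero> f n)" unfolding comb_def using L by simp
    qed
    thus "\<exists>r\<in>carrier R. \<exists>f\<in>E \<rightarrow> carrier R. sim s (comb E c r f)" using f(1) by blast
  qed
  hence Q0: "Qp {} c" by (rule nak_seq[OF T(2) T(1) T(3) E(1) Cc])
  have xr: "Cau (\<lambda>n. coset_rep (x n))" "\<forall>n. x n = P n +>\<^bsub>R\<^esub> coset_rep (x n)"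
    using completion_rep[OF x] by auto
  obtain r f where rf: "r \<in> carrier R" "sim (\<lambda>n. coset_rep (x n)) (comb {} c r f)"
    using Q0 xr(1) unfolding Qp_def by blast
  have "x n = completion_map R I r n" for n
  proof -
    have e: "comb {} c r f n = r" unfolding comb_def lcf_def using rf(1) by simp
    have cr: "coset_rep (x n) \<in> carrier R" using xr(1) unfolding Cau_def by blast
    have "cg (P n) (coset_rep (x n)) r" using rf(2) e unfolding sim_def by metis
    hence "P n +>\<^bsub>R\<^esub> coset_rep (x n) = P n +>\<^bsub>R\<^esub> r" using rcos_eq_iff[OF P_ideal cr rf(1)] by simp
    thus ?thesis using xr(2) unfolding completion_map_def by metis
  qed
  thus ?thesis using rf(1) by blast
qed

lemma main: "adically_complete R I \<longleftrightarrow> completion_fin_gen R I"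
proof
  assume ac: "adically_complete R I"
  hence im: "completion_map R I ` carrier R = adic_completion R I"
    unfolding adically_complete_def bij_betw_def by blast
  let ?e = "completion_map R I \<one>"
  have eC: "?e \<in> adic_completion R I" using phi_in[OF one_closed] .
  show "completion_fin_gen R I" unfolding completion_fin_gen_def
  proof (rule exI[of _ "{?e}"], intro conjI ballI)
    show "finite {?e}" by simp
    show "{?e} \<subseteq> adic_completion R I" using eC by simp
    fix x assume x: "x \<in> adic_completion R I"
    then obtain r where r: "r \<in> carrier R" "x = completion_map R I r" using im by blast
    have "\<forall>n. x n = P n +>\<^bsub>R\<^esub> (finsum R (\<lambda>e. r \<otimes> coset_rep (e n)) {?e})"
    proof
      fix n
      have Cn: "P n +>\<^bsub>R\<^esub> \<one> \<in> a_rcosets\<^bsub>R\<^esub> (P n)" unfolding A_RCOSETS_def' by blast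
      note rr = rcosets_rep[OF P_ideal Cn]
      let ?q = "coset_rep (P n +>\<^bsub>R\<^esub> \<one>)"
      have qc: "?q \<in> carrier R" using rr by simp
      have "cg (P n) ?q \<one>" using rcos_cg[OF P_ideal one_closed] rr by blast
      hence "cg (P n) (r \<otimes> ?q) (r \<otimes> \<one>)" by (rule cg_mult[OF P_ideal cg_refl[OF P_ideal r(1)]])
      hence cq: "cg (P n) r (r \<otimes> ?q)" using r(1) cg_sym[OF P_ideal] by simp
      have "finsum R (\<lambda>e. r \<otimes> coset_rep (e n)) {?e} = r \<otimes> ?q"
        using r(1) qc unfolding completion_map_def by simp
      moreover have "P n +>\<^bsub>R\<^esub> r = P n +>\<^bsub>R\<^esub> (r \<otimes> ?q)"
        using rcos_eq_iff[OF P_ideal r(1)] cq r(1) qc by simp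
      ultimately show "x n = P n +>\<^bsub>R\<^esub> (finsum R (\<lambda>e. r \<otimes> coset_rep (e n)) {?e})"
        using r(2) unfolding completion_map_def by simp
    qed
    moreover have "(\<lambda>e. r) \<in> {?e} \<rightarrow> carrier R" using r(1) by simp
    ultimately show "\<exists>f. f \<in> {?e} \<rightarrow> carrier R \<and>
        (\<forall>n. x n = P n +>\<^bsub>R\<^esub> (finsum R (\<lambda>e. f e \<otimes> coset_rep (e n)) {?e}))" by blast
  qed
next
  assume fg: "completion_fin_gen R I"
  show "adically_complete R I" unfolding adically_complete_def bij_betw_def
  proof (intro conjI)
    show "inj_on (completion_map R I) (carrier R)" by (rule phi_inj)
    show "completion_map R I ` carrier R = adic_completion R I"
    proof
      show "completion_map R I ` carrier R \<subseteq> adic_completion R I" using phi_in by blast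
      show "adic_completion R I \<subseteq> completion_map R I ` carrier R" using phi_surj[OF fg] by blast
    qed
  qed
qed

end

theorem theoremB:
  fixes R :: "('a, 'b) ring_scheme" and I :: "'a set"
  assumes "cring R" and "noetherian_ring R"
    and "ideal I R" and "I \<subseteq> jacobson_radical R"
  shows "adically_complete R I \<longleftrightarrow> completion_fin_gen R I"
proof -
  interpret kset R I
    by (intro kset.intro kset_axioms.intro) (use assms in auto)
  show ?thesis by (rule main)
qed

end
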